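(* Assume $T$ is locally finite, let $\nu$ be a positive Borel measure on $\partial T$ with $0<\nu(\partial T_x)<\infty$ for all $x\in T$, and let $\sigma$ be a positive measure on $T$. The following are equivalent: (i) $\sigma$ is a Carleson measure; (ii) for every $p\in(1,\infty)$ there is $C_p>0$ with $\|\mathcal Pf\|_{L^p(T,\sigma)}\le C_p\|f\|_{L^p(\partial T,\nu)}$ for all $f\in L^p(\partial T,\nu)$, and there is $C>0$ with $\|\mathcal Pf\|_{L^{1,\infty}(T,\sigma)}\le C\|f\|_{L^1(\partial T,\nu)}$ for all $f\in L^1(\partial T,\nu)$; (iii) for every $p\in(1,\infty)$ there is $C_p>0$ with $\|\mathcal Pf\|_{L^p(T,\sigma)}\le C_p\|\mathcal Pf\|_{H^p}$ for all $f\in L^p(\partial T,\nu)$.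
   Context: Let $T$ be a tree, identified with its vertex set, with graph distance $d$; $x\sim y$ means $d(x,y)=1$. Let $\Omega$ be the boundary (space of ends) of $T$; fix $\omega_*\in\Omega$ and set $\partial T=\Omega\setminus\{\omega_*\}$. For $x\in T$, $[x,\omega_* )$ is the geodesic ray from $x$ to $\omega_*$; for $\omega\in\partial T$, $(\omega,\omega_* )$ is the doubly infinite geodesic joining $\omega$ and $\omega_*$. For $y\in T$ write $x\le y$ if either $x\in T$ and $y\in[x,\omega_* )$, or $x\in\partial T$ and $y\in(x,\omega_* )$. Fix $o\in T$ and let $(x_j)_{j\ge0}$ enumerate $[o,\omega_* )$ with $x_0=o$, $x_j\sim x_{j+1}$; the level of $x\in T$ is $\ell(x)=\lim_{j\to\infty}(j-d(x,x_j))$. Sectors: $T_x=\{y\in T:y\le x\}$, $\partial T_x=\{\omega\in\partial T:\omega\le x\}$. $m_\nu(x)=\nu(\partial T_x)$. A positive measure on $T$ is a nonnegative function $\sigma$ on the vertices with $\sigma(E)=\sum_{x\in E}\sigma(x)$; $\|F\|_{L^{1,\infty}(T,\sigma)}=\sup_{\lambda>0}\lambda\,\sigma(\{x:|F(x)|>\lambda\})$. $\sigma$ is a Carleson measure if there is $C>0$ with $\sigma(T_x)\le C\nu(\partial T_x)$ for all $x\in T$. The Poisson integral is $\mathcal Pf(x)=\frac{1}{m_\nu(x)}\int_{\partial T_x}f\,d\nu$. The Laplacian is $\Delta F(x)=F(x)-\sum_{y\sim x,\ \ell(y)=\ell(x)-1}F(y)\frac{m_\nu(y)}{m_\nu(x)}$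 and $F$ is harmonic if $\Delta F\equiv0$; for harmonic $F$ and $1\le p<\infty$, $\|F\|_{H^p}^p=\sup_{k\in\mathbb Z}\sum_{\ell(x)=k}|F(x)|^pm_\nu(x)$ ($\mathcal Pf$ is harmonic). *)

theory Defs
  imports "HOL-Analysis.Analysis"
begin

text \<open>A tree is given by a symmetric irreflexive adjacency relation E on the vertex
type 'v (the tree is identified with its vertex set, i.e. all of 'v), in which any
two vertices are joined by exactly one path (connected and acyclic).\<close>

definition walk :: "('v \<Rightarrow> 'v \<Rightarrow> bool) \<Rightarrow> 'v list \<Rightarrow> bool" where
  "walk E xs \<longleftrightarrow> xs \<noteq> [] \<and> (\<forall>i. Suc i < length xs \<longrightarrow> E (xs ! i) (xs ! Suc i))"

definition is_path :: "('v \<Rightarrow> 'v \<Rightarrow> bool) \<Rightarrow> 'v list \<Rightarrow> bool" where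
  "is_path E xs \<longleftrightarrow> walk E xs \<and> distinct xs"

definition is_tree :: "('v \<Rightarrow> 'v \<Rightarrow> bool) \<Rightarrow> bool" where
  "is_tree E \<longleftrightarrow> (\<forall>x y. E x y \<longrightarrow> E y x) \<and> (\<forall>x. \<not> E x x) \<and>
     (\<forall>x y. \<exists>!p. is_path E p \<and> hd p = x \<and> last p = y)"

definition locally_finite :: "('v \<Rightarrow> 'v \<Rightarrow> bool) \<Rightarrow> bool" where
  "locally_finite E \<longleftrightarrow> (\<forall>x. finite {y. E x y})"

definition tree_dist :: "('v \<Rightarrow> 'v \<Rightarrow> bool) \<Rightarrow> 'v \<Rightarrow> 'v \<Rightarrow> nat" where
  "tree_dist E x y = (LEAST n. \<exists>p. walk E p \<and> hd p = x \<and> last p = y \<and> length p = Suc n)"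

definition ray :: "('v \<Rightarrow> 'v \<Rightarrow> bool) \<Rightarrow> (nat \<Rightarrow> 'v) \<Rightarrow> bool" where
  "ray E r \<longleftrightarrow> (\<forall>n. E (r n) (r (Suc n))) \<and> inj r"

definition same_end :: "(nat \<Rightarrow> 'v) \<Rightarrow> (nat \<Rightarrow> 'v) \<Rightarrow> bool" where
  "same_end r s \<longleftrightarrow> (\<exists>k m. \<forall>n. r (n + k) = s (n + m))"

text \<open>Ends of T are represented by their unique geodesic ray starting at the base
point base = o. The distinguished end \<omega>_* is represented by the ray ws = (x_j)
with ws 0 = o. \<partial>T = \<Omega> \ {\<omega>_*}.\<close>
definition bdry :: "('v \<Rightarrow> 'v \<Rightarrow> bool) \<Rightarrow> 'v \<Rightarrow> (nat \<Rightarrow> 'v) \<Rightarrow> (nat \<Rightarrow> 'v) set" where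
  "bdry E base ws = {r. ray E r \<and> r 0 = base \<and> \<not> same_end r ws}"

definition vle :: "('v \<Rightarrow> 'v \<Rightarrow> bool) \<Rightarrow> (nat \<Rightarrow> 'v) \<Rightarrow> 'v \<Rightarrow> 'v \<Rightarrow> bool" where
  "vle E ws x y \<longleftrightarrow> (\<exists>r. ray E r \<and> r 0 = x \<and> same_end r ws \<and> y \<in> range r)"

definition ble :: "('v \<Rightarrow> 'v \<Rightarrow> bool) \<Rightarrow> (nat \<Rightarrow> 'v) \<Rightarrow> (nat \<Rightarrow> 'v) \<Rightarrow> 'v \<Rightarrow> bool" where
  "ble E ws \<omega> y \<longleftrightarrow> (\<exists>g :: int \<Rightarrow> 'v. (\<forall>n. E (g n) (g (n + 1))) \<and> inj g \<and>
      same_end (\<lambda>n. g (- int n)) \<omega> \<and> same_end (\<lambda>n. g (int n)) ws \<and> y \<in> range g)"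

definition sectorT :: "('v \<Rightarrow> 'v \<Rightarrow> bool) \<Rightarrow> (nat \<Rightarrow> 'v) \<Rightarrow> 'v \<Rightarrow> 'v set" where
  "sectorT E ws x = {y. vle E ws y x}"

definition sectorB :: "('v \<Rightarrow> 'v \<Rightarrow> bool) \<Rightarrow> 'v \<Rightarrow> (nat \<Rightarrow> 'v) \<Rightarrow> 'v \<Rightarrow> (nat \<Rightarrow> 'v) set" where
  "sectorB E base ws x = {\<omega> \<in> bdry E base ws. ble E ws \<omega> x}"

definition level :: "('v \<Rightarrow> 'v \<Rightarrow> bool) \<Rightarrow> (nat \<Rightarrow> 'v) \<Rightarrow> 'v \<Rightarrow> int" where
  "level E ws x = (THE k. \<forall>\<^sub>F j in sequentially. int j - int (tree_dist E x (ws j)) = k)"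

definition m_nu :: "('v \<Rightarrow> 'v \<Rightarrow> bool) \<Rightarrow> 'v \<Rightarrow> (nat \<Rightarrow> 'v) \<Rightarrow> (nat \<Rightarrow> 'v) measure \<Rightarrow> 'v \<Rightarrow> real" where
  "m_nu E base ws \<nu> x = measure \<nu> (sectorB E base ws x)"

definition poisson :: "('v \<Rightarrow> 'v \<Rightarrow> bool) \<Rightarrow> 'v \<Rightarrow> (nat \<Rightarrow> 'v) \<Rightarrow> (nat \<Rightarrow> 'v) measure
    \<Rightarrow> ((nat \<Rightarrow> 'v) \<Rightarrow> real) \<Rightarrow> 'v \<Rightarrow> real" where
  "poisson E base ws \<nu> f x =
     (1 / m_nu E base ws \<nu> x) * (LINT \<omega>:sectorB E base ws x|\<nu>. f \<omega>)"

text \<open>A positive measure on T is a nonnegative function \<sigma>; \<sigma>(A) = \<Sum>_{x\<in>A} \<sigma>(x).\<close>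
definition measT :: "('v \<Rightarrow> real) \<Rightarrow> 'v set \<Rightarrow> ennreal" where
  "measT \<sigma> A = (\<integral>\<^sup>+ x. ennreal (\<sigma> x) \<partial>count_space A)"

definition carleson :: "('v \<Rightarrow> 'v \<Rightarrow> bool) \<Rightarrow> 'v \<Rightarrow> (nat \<Rightarrow> 'v) \<Rightarrow> (nat \<Rightarrow> 'v) measure
    \<Rightarrow> ('v \<Rightarrow> real) \<Rightarrow> bool" where
  "carleson E base ws \<nu> \<sigma> \<longleftrightarrow>
     (\<exists>C>0. \<forall>x. measT \<sigma> (sectorT E ws x) \<le> ennreal C * emeasure \<nu> (sectorB E base ws x))"

text \<open>p-th powers of L^p norms (valued in [0,\<infinity>]).\<close>
definition LpT_pow :: "('v \<Rightarrow> real) \<Rightarrow> real \<Rightarrow> ('v \<Rightarrow> real) \<Rightarrow> ennreal" where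
  "LpT_pow \<sigma> p F = (\<integral>\<^sup>+ x. ennreal (\<bar>F x\<bar> powr p * \<sigma> x) \<partial>count_space UNIV)"

definition Lp_pow :: "'a measure \<Rightarrow> real \<Rightarrow> ('a \<Rightarrow> real) \<Rightarrow> ennreal" where
  "Lp_pow M p f = (\<integral>\<^sup>+ x. ennreal (\<bar>f x\<bar> powr p) \<partial>M)"

definition in_Lp :: "'a measure \<Rightarrow> real \<Rightarrow> ('a \<Rightarrow> real) \<Rightarrow> bool" where
  "in_Lp M p f \<longleftrightarrow> f \<in> borel_measurable M \<and> Lp_pow M p f < \<infinity>"

definition weakL1T :: "('v \<Rightarrow> real) \<Rightarrow> ('v \<Rightarrow> real) \<Rightarrow> ennreal" where
  "weakL1T \<sigma> F = (SUP t\<in>{0<..}. ennreal t * measT \<sigma> {x. \<bar>F x\<bar> > t})"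

definition Hp_pow :: "('v \<Rightarrow> 'v \<Rightarrow> bool) \<Rightarrow> 'v \<Rightarrow> (nat \<Rightarrow> 'v) \<Rightarrow> (nat \<Rightarrow> 'v) measure
    \<Rightarrow> real \<Rightarrow> ('v \<Rightarrow> real) \<Rightarrow> ennreal" where
  "Hp_pow E base ws \<nu> p F = (SUP k::int. \<integral>\<^sup>+ x. ennreal (\<bar>F x\<bar> powr p * m_nu E base ws \<nu> x)
       \<partial>count_space {x. level E ws x = k})"

end

theory Submission
  imports Defs
begin


lemma walk_Cons2: "walk E (x # y # xs) \<longleftrightarrow> E x y \<and> walk E (y # xs)"
proof
  assume h: "walk E (x # y # xs)"
  have all: "\<forall>i. Suc i < length (x # y # xs) \<longrightarrow> E ((x # y # xs) ! i) ((x # y # xs) ! Suc i)"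
    using h unfolding walk_def by blast
  have "E ((x # y # xs) ! 0) ((x # y # xs) ! Suc 0)" using all[rule_format, of 0] by simp
  then have "E x y" by simp
  moreover have "walk E (y # xs)" unfolding walk_def
  proof (intro conjI allI impI)
    fix i assume "Suc i < length (y # xs)"
    then have "Suc (Suc i) < length (x # y # xs)" by simp
    then have "E ((x # y # xs) ! Suc i) ((x # y # xs) ! Suc (Suc i))" using all[rule_format, of "Suc i"] by simp
    then show "E ((y # xs) ! i) ((y # xs) ! Suc i)" by simp
  qed simp
  ultimately show "E x y \<and> walk E (y # xs)" by simp
next
  assume h: "E x y \<and> walk E (y # xs)"
  show "walk E (x # y # xs)" unfolding walk_def
  proof (intro conjI allI impI)
    fix i assume i: "Suc i < length (x # y # xs)"
    show "E ((x # y # xs) ! i) ((x # y # xs) ! Suc i)"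
    proof (cases i)
      case 0 then show ?thesis using h by simp
    next
      case (Suc j)
      then have "Suc j < length (y # xs)" using i by simp
      then show ?thesis using h Suc unfolding walk_def by simp
    qed
  qed simp
qed

lemma walk_single[simp]: "walk E [x]"
  unfolding walk_def by simp

lemma walk_drop: "walk E p \<Longrightarrow> n < length p \<Longrightarrow> walk E (drop n p)"
  unfolding walk_def by (auto simp: add.commute)

lemma walk_path:
  "walk E p \<Longrightarrow> \<exists>q. is_path E q \<and> hd q = hd p \<and> last q = last p \<and> length q \<le> length p"
proof (induction p)
  case Nil then show ?case by (simp add: walk_def)
next
  case (Cons x xs)
  show ?case
  proof (cases xs)
    case Nil then show ?thesis by (intro exI[of _ "[x]"]) (simp add: is_path_def)
  next
    case (Cons y ys)
    with Cons.prems have exy: "E x y" and wxs: "walk E xs" by (auto simp: walk_Cons2)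
    from Cons.IH[OF wxs] obtain q where q: "is_path E q" "hd q = hd xs" "last q = last xs"
      "length q \<le> length xs" by blast
    have qne: "q \<noteq> []" using q(1) by (simp add: is_path_def walk_def)
    show ?thesis
    proof (cases "x \<in> set q")
      case True
      then obtain q1 q2 where qs: "q = q1 @ x # q2" by (meson split_list)
      have "drop (length q1) q = x # q2" using qs by simp
      moreover have "walk E (drop (length q1) q)" using q(1) qs
        by (intro walk_drop) (auto simp: is_path_def)
      ultimately have "is_path E (x # q2)" using q(1) qs by (auto simp: is_path_def)
      moreover have "last (x # q2) = last q" using qs by simp
      ultimately show ?thesis using q qs \<open>xs = y # ys\<close> by (intro exI[of _ "x # q2"]) auto
    next
      case False
      have "q = hd q # tl q" using qne by simp
      then have "walk E (x # q)" using q(1) exy q(2) \<open>xs = y # ys\<close>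
        by (metis is_path_def list.sel(1) walk_Cons2)
      then have "is_path E (x # q)" using False q(1) by (simp add: is_path_def)
      then show ?thesis using q qne \<open>xs = y # ys\<close> by (intro exI[of _ "x # q"]) auto
    qed
  qed
qed

lemma path_unique:
  assumes "is_tree E" "is_path E p" "is_path E q" "hd p = hd q" "last p = last q"
  shows "p = q"
proof -
  have "\<exists>!p. is_path E p \<and> hd p = hd q \<and> last p = last q"
    using assms(1) unfolding is_tree_def by blast
  then show ?thesis using assms(2-5) by blast
qed

lemma tree_dist_path:
  assumes tr: "is_tree E" and q: "is_path E q"
  shows "tree_dist E (hd q) (last q) = length q - 1"
  unfolding tree_dist_def
proof (rule Least_equality)
  have "q \<noteq> []" using q by (simp add: is_path_def walk_def)
  then show "\<exists>p. walk E p \<and> hd p = hd q \<and> last p = last q \<and> length p = Suc (length q - 1)"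
    using q by (intro exI[of _ q]) (auto simp: is_path_def)
next
  fix n assume "\<exists>p. walk E p \<and> hd p = hd q \<and> last p = last q \<and> length p = Suc n"
  then obtain p where p: "walk E p" "hd p = hd q" "last p = last q" "length p = Suc n" by blast
  from walk_path[OF p(1)] obtain q' where q': "is_path E q'" "hd q' = hd p" "last q' = last p"
    "length q' \<le> length p" by blast
  have "q' = q" using path_unique[OF tr q'(1) q] q' p by simp
  then show "length q - 1 \<le> n" using q' p by simp
qed

lemma ray_path:
  assumes "ray E r"
  shows "is_path E (map r [0..<Suc k])" "hd (map r [0..<Suc k]) = r 0"
    "last (map r [0..<Suc k]) = r k"
proof -
  show "is_path E (map r [0..<Suc k])"
    unfolding is_path_def walk_def using assms
    by (auto simp: ray_def distinct_map nth_append inj_on_def simp del: upt_Suc)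
  show "hd (map r [0..<Suc k]) = r 0" by (simp add: hd_map del: upt_Suc)
  show "last (map r [0..<Suc k]) = r k" by simp
qed

lemma same_end_sym: "same_end r s \<Longrightarrow> same_end s r"
  unfolding same_end_def by metis

lemma same_end_trans: "same_end r s \<Longrightarrow> same_end s t \<Longrightarrow> same_end r t"
proof -
  assume "same_end r s" "same_end s t"
  then obtain k m k' m' where a: "\<And>n. r (n + k) = s (n + m)" and b: "\<And>n. s (n + k') = t (n + m')"
    unfolding same_end_def by blast
  have "r (n + (k + k')) = t (n + (m + m'))" for n
  proof -
    have "r (n + (k + k')) = r ((n + k') + k)" by (simp add: ac_simps)
    also have "\<dots> = s ((n + k') + m)" by (rule a)
    also have "\<dots> = s ((n + m) + k')" by (simp add: ac_simps)
    also have "\<dots> = t ((n + m) + m')" using b by simp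
    finally show ?thesis by (simp add: ac_simps)
  qed
  then show "same_end r t" unfolding same_end_def by blast
qed

lemma same_end_shift: "same_end (\<lambda>n. r (n + c)) r"
  unfolding same_end_def by (rule exI[of _ 0], rule exI[of _ c]) simp


locale tree_setting =
  fixes E :: "'v \<Rightarrow> 'v \<Rightarrow> bool" and ws :: "nat \<Rightarrow> 'v" and base :: 'v
  assumes tree: "is_tree E" and ws_ray: "ray E ws"
begin

lemma map_upt_nth: "i \<le> k \<Longrightarrow> map r [0..<Suc k] ! i = r i"
  by (simp del: upt_Suc)

lemma ray_unique:
  assumes r: "ray E r" and s: "ray E s" and r0: "r 0 = s 0" and se: "same_end r s"
  shows "r = s"
proof -
  obtain k m where km: "\<And>n. r (n + k) = s (n + m)" using se unfolding same_end_def by blast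
  let ?P = "map r [0..<Suc k]" let ?Q = "map s [0..<Suc m]"
  have PQ: "?P = ?Q"
    apply (rule path_unique[OF tree ray_path(1)[OF r] ray_path(1)[OF s]])
    using r0 km[of 0] ray_path(2,3)[OF r, of k] ray_path(2,3)[OF s, of m] by (simp_all del: upt_Suc)
  have "length ?P = length ?Q" using PQ by simp
  hence km': "k = m" by (simp del: upt_Suc)
  have le: "r i = s i" if "i \<le> k" for i
  proof -
    have "?P ! i = ?Q ! i" using PQ by simp
    thus ?thesis using that km' map_upt_nth[of i k r] map_upt_nth[of i m s] by simp
  qed
  show ?thesis
  proof
    fix i show "r i = s i"
    proof (cases "i \<le> k")
      case True then show ?thesis by (rule le)
    next
      case False
      then have "r i = r ((i - k) + k)" by simp
      also have "\<dots> = s ((i - k) + m)" by (rule km)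
      also have "\<dots> = s i" using False km' by simp
      finally show ?thesis .
    qed
  qed
qed

lemma ray_exists: "\<exists>r. ray E r \<and> r 0 = x \<and> same_end r ws"
proof -
  obtain p where p: "is_path E p" "hd p = x" "last p = ws 0" using tree unfolding is_tree_def by blast
  have pne: "p \<noteq> []" using p(1) by (simp add: is_path_def walk_def)
  have wp: "\<And>i. Suc i < length p \<Longrightarrow> E (p ! i) (p ! Suc i)" using p(1) by (simp add: is_path_def walk_def)
  have dp: "distinct p" using p(1) by (simp add: is_path_def)
  define i0 where "i0 = (LEAST i. i < length p \<and> p ! i \<in> range ws)"
  have ex: "length p - 1 < length p \<and> p ! (length p - 1) \<in> range ws" using pne p(3) by (simp add: last_conv_nth)
  have i0: "i0 < length p \<and> p ! i0 \<in> range ws" unfolding i0_def by (rule LeastI[of _ "length p - 1"]) (rule ex)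
  have before: "p ! i \<notin> range ws" if "i < i0" for i
  proof
    assume "p ! i \<in> range ws"
    moreover have "i < length p" using that i0 by simp
    ultimately have "i0 \<le> i" unfolding i0_def by (intro Least_le) simp
    then show False using that by simp
  qed
  obtain m where m: "p ! i0 = ws m" using i0 by blast
  define r where "r n = (if n < i0 then p ! n else ws (n - i0 + m))" for n
  have injws: "inj ws" using ws_ray by (simp add: ray_def)
  have adj: "E (r n) (r (Suc n))" for n
  proof (cases "Suc n < i0")
    case True then show ?thesis using wp[of n] i0 by (simp add: r_def)
  next
    case F: False
    show ?thesis
    proof (cases "Suc n = i0")
      case True then show ?thesis using wp[of n] i0 m by (simp add: r_def)
    next
      case False
      then have "i0 \<le> n" using F by simp
      then have "Suc n - i0 + m = Suc (n - i0 + m)" by simp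
      then show ?thesis using ws_ray \<open>i0 \<le> n\<close> unfolding ray_def r_def by simp
    qed
  qed
  have "inj r"
  proof (rule injI)
    fix a b assume ab: "r a = r b"
    show "a = b"
    proof (cases "a < i0"; cases "b < i0")
      assume "a < i0" "b < i0"
      then show ?thesis using ab dp i0 by (simp add: r_def nth_eq_iff_index_eq)
    next
      assume "a < i0" "\<not> b < i0"
      then show ?thesis using ab before[of a] by (simp add: r_def)
    next
      assume "\<not> a < i0" "b < i0"
      then show ?thesis using ab before[of b] by (simp add: r_def) (metis rangeI)
    next
      assume "\<not> a < i0" "\<not> b < i0"
      then show ?thesis using ab injws by (simp add: r_def inj_eq)
    qed
  qed
  have "ray E r" using adj \<open>inj r\<close> by (simp add: ray_def)
  moreover have "r 0 = x"
  proof (cases "i0 = 0")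
    case True then show ?thesis using m p(2) pne by (simp add: r_def hd_conv_nth)
  next
    case False then show ?thesis using p(2) pne by (simp add: r_def hd_conv_nth)
  qed
  moreover have "same_end r ws" unfolding same_end_def
    by (rule exI[of _ i0], rule exI[of _ m]) (simp add: r_def)
  ultimately show ?thesis by blast
qed

definition up :: "'v \<Rightarrow> nat \<Rightarrow> 'v" where
  "up x = (THE r. ray E r \<and> r 0 = x \<and> same_end r ws)"

lemma up_ex1: "\<exists>!r. ray E r \<and> r 0 = x \<and> same_end r ws"
proof -
  obtain r where r: "ray E r \<and> r 0 = x \<and> same_end r ws" using ray_exists by blast
  moreover have "s = r" if "ray E s \<and> s 0 = x \<and> same_end s ws" for s
    using that r by (intro ray_unique) (auto intro: same_end_trans same_end_sym)
  ultimately show ?thesis by blast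
qed

lemma up: "ray E (up x)" "up x 0 = x" "same_end (up x) ws"
  using theI'[OF up_ex1[of x]] unfolding up_def by auto

lemma up_unique: "ray E r \<Longrightarrow> r 0 = x \<Longrightarrow> same_end r ws \<Longrightarrow> r = up x"
  using up_ex1[of x] up[of x] by blast

definition par :: "'v \<Rightarrow> 'v" where "par x = up x 1"

lemma up_shift: "up (up x k) = (\<lambda>n. up x (n + k))"
proof (rule sym, rule up_unique)
  have "inj (up x)" using up(1) by (simp add: ray_def)
  then have "inj (\<lambda>n. up x (n + k))" unfolding inj_def by (metis add_right_cancel)
  then show "ray E (\<lambda>n. up x (n + k))" using up(1)[of x] by (simp add: ray_def)
  show "up x (0 + k) = up x k" by simp
  show "same_end (\<lambda>n. up x (n + k)) ws" by (rule same_end_trans[OF same_end_shift up(3)])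
qed

lemma up_iter: "up x n = (par ^^ n) x"
proof (induction n)
  case 0 then show ?case by (simp add: up(2))
next
  case (Suc n)
  have "up x (Suc n) = up (up x n) 1" by (simp add: up_shift)
  also have "\<dots> = par (up x n)" by (simp add: par_def)
  finally show ?case using Suc by simp
qed

lemma vle_iff: "vle E ws x y \<longleftrightarrow> (\<exists>n. (par ^^ n) x = y)"
proof
  assume "vle E ws x y"
  then obtain r where "ray E r" "r 0 = x" "same_end r ws" "y \<in> range r" unfolding vle_def by blast
  then have "r = up x" by (intro up_unique)
  then show "\<exists>n. (par ^^ n) x = y" using \<open>y \<in> range r\<close> up_iter by auto
next
  assume "\<exists>n. (par ^^ n) x = y"
  then show "vle E ws x y" unfolding vle_def using up up_iter by (metis rangeI)
qed

lemma E_par: "E x (par x)"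
  using up(1)[of x] up(2)[of x] unfolding ray_def par_def by (metis One_nat_def)

lemma iter_eq: "(par ^^ n) x = (par ^^ m) x \<Longrightarrow> n = m"
  using up(1)[of x] unfolding ray_def up_iter[symmetric] by (simp add: inj_eq)

lemma vle_refl: "vle E ws x x"
  unfolding vle_iff by (rule exI[of _ 0]) simp

lemma vle_trans: "vle E ws x y \<Longrightarrow> vle E ws y z \<Longrightarrow> vle E ws x z"
  unfolding vle_iff by (metis funpow_add o_apply)

lemma vle_antisym: "vle E ws x y \<Longrightarrow> vle E ws y x \<Longrightarrow> x = y"
proof -
  assume "vle E ws x y" "vle E ws y x"
  then obtain n m where "(par ^^ n) x = y" "(par ^^ m) y = x" unfolding vle_iff by blast
  then have "(par ^^ (m + n)) x = (par ^^ 0) x" by (simp add: funpow_add)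
  then have "m + n = 0" by (rule iter_eq)
  then show "x = y" using \<open>(par ^^ n) x = y\<close> by simp
qed

lemma vle_chain: "vle E ws z x \<Longrightarrow> vle E ws z y \<Longrightarrow> vle E ws x y \<or> vle E ws y x"
proof -
  assume "vle E ws z x" "vle E ws z y"
  then obtain a b where a: "(par ^^ a) z = x" and b: "(par ^^ b) z = y" unfolding vle_iff by blast
  show ?thesis
  proof (cases "a \<le> b")
    case True
    then have "(par ^^ (b - a)) x = y" using a b by (metis funpow_add le_add_diff_inverse2 o_apply)
    then show ?thesis unfolding vle_iff by blast
  next
    case False
    then have "(par ^^ (a - b)) y = x" using a b by (metis funpow_add le_add_diff_inverse2 nat_le_linear o_apply)
    then show ?thesis unfolding vle_iff by blast
  qed
qed

lemma g_up:
  assumes adj: "\<forall>n. E (g n) (g (n + 1))" and ig: "inj g" and se: "same_end (\<lambda>n. g (int n)) ws"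
  shows "up (g i) = (\<lambda>n. g (i + int n))"
proof (rule sym, rule up_unique)
  have "inj (\<lambda>n::nat. g (i + int n))" using ig unfolding inj_def by (metis add_left_cancel of_nat_eq_iff)
  moreover have "E (g (i + int n)) (g (i + int (Suc n)))" for n
    using adj[rule_format, of "i + int n"] by (simp add: ac_simps)
  ultimately show "ray E (\<lambda>n. g (i + int n))" by (simp add: ray_def)
  show "g (i + int 0) = g i" by simp
  have "same_end (\<lambda>n. g (i + int n)) (\<lambda>n. g (int n))"
  proof (cases "0 \<le> i")
    case True
    then have "\<forall>n. g (i + int (n + 0)) = g (int (n + nat i))" by (simp add: add.commute)
    then show ?thesis unfolding same_end_def by blast
  next
    case False
    then have "\<forall>n. g (i + int (n + nat (- i))) = g (int (n + 0))" by simp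
    then show ?thesis unfolding same_end_def by blast
  qed
  then show "same_end (\<lambda>n. g (i + int n)) ws" using se by (rule same_end_trans)
qed

lemma g_iter:
  assumes "\<forall>n. E (g n) (g (n + 1))" "inj g" "same_end (\<lambda>n. g (int n)) ws"
  shows "(par ^^ n) (g i) = g (i + int n)"
  using g_up[OF assms, of i] up_iter[of "g i" n] by simp

lemma ble_mono: "ble E ws \<omega> y \<Longrightarrow> vle E ws y x \<Longrightarrow> ble E ws \<omega> x"
proof -
  assume "ble E ws \<omega> y" "vle E ws y x"
  then obtain g where g: "\<forall>n. E (g n) (g (n + 1))" "inj g" "same_end (\<lambda>n. g (- int n)) \<omega>"
    "same_end (\<lambda>n. g (int n)) ws" "y \<in> range g" unfolding ble_def by blast
  obtain i where i: "y = g i" using g(5) by blast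
  obtain n where "(par ^^ n) y = x" using \<open>vle E ws y x\<close> unfolding vle_iff by blast
  then have "x = g (i + int n)" using g_iter[OF g(1,2,4)] i by simp
  then show ?thesis unfolding ble_def using g by blast
qed

lemma g_vle:
  assumes "\<forall>n. E (g n) (g (n + 1))" "inj g" "same_end (\<lambda>n. g (int n)) ws" "i \<le> j"
  shows "vle E ws (g i) (g j)"
proof -
  have "(par ^^ nat (j - i)) (g i) = g (i + int (nat (j - i)))" by (rule g_iter[OF assms(1-3)])
  also have "\<dots> = g j" using assms(4) by simp
  finally show ?thesis unfolding vle_iff by blast
qed

lemma ble_base:
  assumes "ble E ws \<omega> x"
  shows "\<exists>M. \<forall>N\<ge>M. vle E ws (\<omega> N) x"
proof -
  obtain g where g: "\<forall>n. E (g n) (g (n + 1))" "inj g" "same_end (\<lambda>n. g (- int n)) \<omega>"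
    "same_end (\<lambda>n. g (int n)) ws" "x \<in> range g" using assms unfolding ble_def by blast
  obtain i where i: "x = g i" using g(5) by blast
  obtain k m where km: "\<And>n. g (- int (n + k)) = \<omega> (n + m)" using g(3) unfolding same_end_def by blast
  have "vle E ws (\<omega> N) x" if N: "N \<ge> m + nat \<bar>i\<bar>" for N
  proof -
    have "\<omega> N = g (- int ((N - m) + k))" using km[of "N - m"] N by simp
    moreover have "- int ((N - m) + k) \<le> i" using N by linarith
    ultimately show ?thesis using g_vle[OF g(1,2,4)] i by simp
  qed
  then show ?thesis by blast
qed

lemma ble_comp: "ble E ws \<omega> x \<Longrightarrow> ble E ws \<omega> y \<Longrightarrow> vle E ws x y \<or> vle E ws y x"
proof -
  assume "ble E ws \<omega> x" "ble E ws \<omega> y"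
  then obtain M1 M2 where "\<forall>N\<ge>M1. vle E ws (\<omega> N) x" "\<forall>N\<ge>M2. vle E ws (\<omega> N) y"
    using ble_base by meson
  then have "vle E ws (\<omega> (M1 + M2)) x" "vle E ws (\<omega> (M1 + M2)) y" by auto
  then show ?thesis by (rule vle_chain)
qed

lemma ble_down: "ble E ws \<omega> x \<Longrightarrow> \<exists>y. (par ^^ n) y = x \<and> ble E ws \<omega> y"
proof -
  assume "ble E ws \<omega> x"
  then obtain g where g: "\<forall>n. E (g n) (g (n + 1))" "inj g" "same_end (\<lambda>n. g (- int n)) \<omega>"
    "same_end (\<lambda>n. g (int n)) ws" "x \<in> range g" unfolding ble_def by blast
  obtain i where i: "x = g i" using g(5) by blast
  have "(par ^^ n) (g (i - int n)) = x" using g_iter[OF g(1,2,4)] i by simp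
  moreover have "ble E ws \<omega> (g (i - int n))" unfolding ble_def using g by blast
  ultimately show ?thesis by blast
qed

lemma level_eq:
  assumes ab: "\<And>n. up x (n + a) = ws (n + b)"
  shows "level E ws x = int b - int a"
proof -
  have d: "tree_dist E x (ws (n + b)) = n + a" for n
  proof -
    have "tree_dist E (hd (map (up x) [0..<Suc (n + a)])) (last (map (up x) [0..<Suc (n + a)]))
        = length (map (up x) [0..<Suc (n + a)]) - 1"
      by (rule tree_dist_path[OF tree ray_path(1)[OF up(1)]])
    then show ?thesis using ray_path(2,3)[OF up(1), of x "n + a"] up(2)[of x] ab[of n]
      by (simp del: upt_Suc)
  qed
  have ev: "\<forall>\<^sub>F j in sequentially. int j - int (tree_dist E x (ws j)) = int b - int a"
    unfolding eventually_sequentially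
  proof (intro exI[of _ b] allI impI)
    fix j assume "b \<le> j"
    then have "j = (j - b) + b" by simp
    then have "tree_dist E x (ws j) = (j - b) + a" using d[of "j - b"] by metis
    then show "int j - int (tree_dist E x (ws j)) = int b - int a" using \<open>b \<le> j\<close> by simp
  qed
  show ?thesis unfolding level_def
  proof (rule the_equality)
    show "\<forall>\<^sub>F j in sequentially. int j - int (tree_dist E x (ws j)) = int b - int a" by (rule ev)
  next
    fix k assume "\<forall>\<^sub>F j in sequentially. int j - int (tree_dist E x (ws j)) = k"
    then have "\<forall>\<^sub>F j in sequentially. k = int b - int a" using ev by (rule eventually_elim2) simp
    then show "k = int b - int a" by simp
  qed
qed

lemma level_par: "level E ws (par x) = level E ws x + 1"
proof -
  obtain a b where ab: "\<And>n. up x (n + a) = ws (n + b)" using up(3)[of x] unfolding same_end_def by blast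
  have "up (par x) = (\<lambda>n. up x (n + 1))" unfolding par_def by (rule up_shift)
  then have "up (par x) (n + a) = ws (n + (b + 1))" for n using ab[of "n + 1"] by (simp add: ac_simps)
  then have "level E ws (par x) = int (b + 1) - int a" by (rule level_eq)
  then show ?thesis using level_eq[OF ab] by simp
qed

lemma level_iter: "level E ws ((par ^^ n) x) = level E ws x + int n"
  by (induction n) (simp_all add: level_par)

lemma vle_level: "vle E ws y x \<Longrightarrow> level E ws y \<le> level E ws x"
  unfolding vle_iff using level_iter by force

lemma vle_level_eq: "vle E ws y x \<Longrightarrow> level E ws y = level E ws x \<Longrightarrow> y = x"
  unfolding vle_iff using level_iter by force

lemma sectorB_mono: "vle E ws y x \<Longrightarrow> sectorB E base ws y \<subseteq> sectorB E base ws x"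
  unfolding sectorB_def using ble_mono by blast

lemma sectorB_disj: "\<not> vle E ws x y \<Longrightarrow> \<not> vle E ws y x \<Longrightarrow> sectorB E base ws x \<inter> sectorB E base ws y = {}"
  unfolding sectorB_def using ble_comp by blast

lemma same_level_disj: "level E ws x = level E ws y \<Longrightarrow> x \<noteq> y \<Longrightarrow> sectorB E base ws x \<inter> sectorB E base ws y = {}"
  by (metis sectorB_disj vle_level_eq)

definition D :: "int \<Rightarrow> 'v \<Rightarrow> 'v set" where
  "D k x = {y. level E ws y = k \<and> vle E ws y x}"

lemma D_finite:
  assumes lf: "locally_finite E"
  shows "k \<le> level E ws x \<Longrightarrow> finite (D k x)"
proof (induction "nat (level E ws x - k)" arbitrary: x)
  case 0
  then have "D k x \<subseteq> {x}" unfolding D_def using vle_level_eq vle_level by force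
  then show ?case by (rule finite_subset) simp
next
  case (Suc n)
  have sub: "D k x \<subseteq> (\<Union>c\<in>{c. par c = x}. D k c)"
  proof
    fix y assume "y \<in> D k x"
    then have y: "level E ws y = k" "vle E ws y x" unfolding D_def by auto
    then obtain j where j: "(par ^^ j) y = x" unfolding vle_iff by blast
    have "j \<noteq> 0"
    proof
      assume "j = 0" then have "x = y" using j by simp
      then show False using Suc(2) y by simp
    qed
    then obtain j' where j': "j = Suc j'" by (cases j) auto
    let ?c = "(par ^^ j') y"
    have "par ?c = x" using j j' by simp
    moreover have "vle E ws y ?c" unfolding vle_iff by blast
    ultimately show "y \<in> (\<Union>c\<in>{c. par c = x}. D k c)" using y unfolding D_def by blast
  qed
  have "{c. par c = x} \<subseteq> {c. E x c}" using E_par tree unfolding is_tree_def by blast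
  then have fin: "finite {c. par c = x}" using lf unfolding locally_finite_def by (blast intro: finite_subset)
  have "finite (D k c)" if "par c = x" for c
  proof -
    have lc: "level E ws c = level E ws x - 1" using level_par[of c] that by simp
    show ?thesis using Suc(1)[of c] Suc(2) lc by simp
  qed
  then have "finite (\<Union>c\<in>{c. par c = x}. D k c)" using fin by blast
  then show ?case using sub by (rule finite_subset[rotated])
qed

lemma D_cover:
  assumes "k \<le> level E ws x"
  shows "sectorB E base ws x = (\<Union>y\<in>D k x. sectorB E base ws y)"
proof
  show "(\<Union>y\<in>D k x. sectorB E base ws y) \<subseteq> sectorB E base ws x"
    unfolding D_def using sectorB_mono by blast
  show "sectorB E base ws x \<subseteq> (\<Union>y\<in>D k x. sectorB E base ws y)"
  proof
    fix \<omega> assume "\<omega> \<in> sectorB E base ws x"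
    then have w: "\<omega> \<in> bdry E base ws" "ble E ws \<omega> x" unfolding sectorB_def by auto
    obtain y where y: "(par ^^ nat (level E ws x - k)) y = x" "ble E ws \<omega> y"
      using ble_down[OF w(2)] by blast
    have "level E ws y = k" using level_iter[of "nat (level E ws x - k)" y] y(1) assms by simp
    moreover have "vle E ws y x" using y(1) unfolding vle_iff by blast
    ultimately show "\<omega> \<in> (\<Union>y\<in>D k x. sectorB E base ws y)"
      using w y unfolding D_def sectorB_def by blast
  qed
qed

lemma D_disj: "disjoint_family_on (sectorB E base ws) (D k x)"
  unfolding disjoint_family_on_def D_def using same_level_disj by auto

lemma D_disj2: "\<not> vle E ws x y \<Longrightarrow> \<not> vle E ws y x \<Longrightarrow> D k x \<inter> D k y = {}"
  unfolding D_def using vle_chain by blast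

end


lemma ennreal_unbounded:
  fixes r B :: ennreal
  assumes r: "0 < r" and le: "\<And>n. of_nat n * r \<le> B"
  shows "B = \<infinity>"
proof (rule ccontr)
  assume "B \<noteq> \<infinity>"
  then obtain b where b: "B = ennreal b" "0 \<le> b" by (cases B) auto
  show False
  proof (cases "r = \<infinity>")
    case True
    then show False using le[of 1] b by (simp add: top_unique)
  next
    case False
    then obtain r' where r': "r = ennreal r'" "0 < r'" using r by (cases r) auto
    obtain n where n: "b < real n * r'" using reals_Archimedean3[OF r'(2)] by blast
    have "ennreal (real n * r') \<le> ennreal b" using le[of n] r' b by (simp add: ennreal_mult' ennreal_of_nat_eq_real_of_nat)
    then have "real n * r' \<le> b" using b by (simp add: ennreal_le_iff)
    then show False using n by simp
  qed
qed

lemma nn_integral_count_space_finsup: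
  fixes f :: "'a \<Rightarrow> ennreal"
  assumes fs: "\<And>F. finite F \<Longrightarrow> F \<subseteq> A \<Longrightarrow> sum f F \<le> B"
  shows "(\<integral>\<^sup>+x. f x \<partial>count_space A) \<le> B"
  unfolding nn_integral_def
proof (rule SUP_least)
  fix g assume "g \<in> {g. simple_function (count_space A) g \<and> g \<le> f}"
  then have sg: "simple_function (count_space A) g" and gf: "g \<le> f" by auto
  have fin: "finite (g ` A)" using sg by simp
  show "integral\<^sup>S (count_space A) g \<le> B"
  proof (cases "finite {a\<in>A. 0 < g a}")
    case True
    have "integral\<^sup>S (count_space A) g = integral\<^sup>N (count_space A) g"
      using nn_integral_eq_simple_integral[OF sg] by simp
    also have "\<dots> = (\<Sum>a|a\<in>A \<and> 0 < g a. g a)" by (rule nn_integral_count_space[OF True])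
    also have "\<dots> \<le> (\<Sum>a|a\<in>A \<and> 0 < g a. f a)" using gf by (intro sum_mono) (auto simp: le_fun_def)
    also have "\<dots> \<le> B" using True by (intro fs) auto
    finally show ?thesis .
  next
    case False
    have "{a\<in>A. 0 < g a} = (\<Union>r\<in>{r\<in>g ` A. 0 < r}. {a\<in>A. g a = r})" by auto
    then obtain r where r: "r \<in> g ` A" "0 < r" "infinite {a\<in>A. g a = r}"
      using False fin by (metis (no_types, lifting) finite_UN mem_Collect_eq finite_subset subsetI)
    have "of_nat n * r \<le> B" for n
    proof -
      obtain F where F: "finite F" "card F = n" "F \<subseteq> {a\<in>A. g a = r}"
        using infinite_arbitrarily_large[OF r(3)] by blast
      have "(\<Sum>a\<in>F. g a) = (\<Sum>a\<in>F. r)" using F(3) by (intro sum.cong) auto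
      then have "of_nat n * r = (\<Sum>a\<in>F. g a)" using F(2) by simp
      also have "\<dots> \<le> (\<Sum>a\<in>F. f a)" using gf by (intro sum_mono) (auto simp: le_fun_def)
      also have "\<dots> \<le> B" using F by (intro fs) auto
      finally show ?thesis .
    qed
    then have Binf: "B = \<infinity>" by (rule ennreal_unbounded[OF r(2)])
    show ?thesis unfolding Binf infinity_ennreal_def by (rule top_greatest)
  qed
qed

lemma nn_integral_count_space_subset:
  fixes f :: "'a \<Rightarrow> ennreal"
  assumes "A \<subseteq> B"
  shows "(\<integral>\<^sup>+x. f x \<partial>count_space A) \<le> (\<integral>\<^sup>+x. f x \<partial>count_space B)"
proof -
  have "(\<integral>\<^sup>+x. f x \<partial>count_space A) = (\<integral>\<^sup>+x. f x * indicator A x \<partial>count_space UNIV)"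
    by (rule nn_integral_count_space_indicator) (simp add: NO_MATCH_def)
  also have "\<dots> \<le> (\<integral>\<^sup>+x. f x * indicator B x \<partial>count_space UNIV)"
    using assms by (intro nn_integral_mono) (auto split: split_indicator)
  also have "\<dots> = (\<integral>\<^sup>+x. f x \<partial>count_space B)"
    by (rule nn_integral_count_space_indicator[symmetric]) (simp add: NO_MATCH_def)
  finally show ?thesis .
qed

lemma measT_mono: "A \<subseteq> B \<Longrightarrow> measT \<sigma> A \<le> measT \<sigma> B"
  unfolding measT_def by (rule nn_integral_count_space_subset)

lemma finite_maximal:
  fixes le :: "'v \<Rightarrow> 'v \<Rightarrow> bool"
  assumes tr: "\<And>x y z. le x y \<Longrightarrow> le y z \<Longrightarrow> le x z"
    and an: "\<And>x y. le x y \<Longrightarrow> le y x \<Longrightarrow> x = y"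
    and rf: "\<And>x. le x x"
    and F: "finite F" "y \<in> F"
  shows "\<exists>x\<in>F. le y x \<and> (\<forall>z\<in>F. le x z \<longrightarrow> z = x)"
proof -
  define h where "h x = card {z\<in>F. le x z}" for x
  have "y \<in> F \<and> le y y" using F(2) rf by simp
  then obtain x where x1: "x \<in> F \<and> le y x" and x2: "\<And>x'. x' \<in> F \<and> le y x' \<Longrightarrow> h x \<le> h x'"
    using ex_has_least_nat[of "\<lambda>x. x \<in> F \<and> le y x" y h] by auto
  have "z = x" if z: "z \<in> F" "le x z" for z
  proof (rule ccontr)
    assume zx: "z \<noteq> x"
    have sub: "{w\<in>F. le z w} \<subseteq> {w\<in>F. le x w}"
    proof
      fix w assume "w \<in> {w\<in>F. le z w}"
      then show "w \<in> {w\<in>F. le x w}" using tr[OF z(2)] by simp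
    qed
    have "\<not> le z x" using an z(2) zx by metis
    then have "x \<notin> {w\<in>F. le z w}" by simp
    moreover have "x \<in> {w\<in>F. le x w}" using x1 rf by simp
    ultimately have "{w\<in>F. le z w} \<subset> {w\<in>F. le x w}" using sub by blast
    then have "h z < h x" unfolding h_def using F(1) by (intro psubset_card_mono) auto
    moreover have "h x \<le> h z"
    proof -
      have "le y z" using tr x1 z(2) by metis
      then show ?thesis using x2[of z] z(1) by simp
    qed
    ultimately show False by simp
  qed
  then have "\<forall>z\<in>F. le x z \<longrightarrow> z = x" by blast
  then show ?thesis using x1 by (intro bexI[of _ x]) auto
qed


lemma maximal_lemma:
  fixes le :: "'v \<Rightarrow> 'v \<Rightarrow> bool" and M :: "'b measure" and A :: "'v \<Rightarrow> 'b set" and \<sigma> :: "'v \<Rightarrow> real"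
    and h :: "'b \<Rightarrow> ennreal"
  assumes tr: "\<And>x y z. le x y \<Longrightarrow> le y z \<Longrightarrow> le x z"
    and an: "\<And>x y. le x y \<Longrightarrow> le y x \<Longrightarrow> x = y"
    and rf: "\<And>x. le x x"
    and A_sets: "\<And>x. x \<in> Vs \<Longrightarrow> A x \<in> sets M"
    and disj: "\<And>x y. x \<in> Vs \<Longrightarrow> y \<in> Vs \<Longrightarrow> \<not> le x y \<Longrightarrow> \<not> le y x \<Longrightarrow> A x \<inter> A y = {}"
    and carl: "\<And>x. x \<in> Vs \<Longrightarrow> measT \<sigma> {y\<in>Vs. le y x} \<le> ennreal C * emeasure M (A x)"
    and S: "S \<subseteq> Vs" and hm: "h \<in> borel_measurable M"
    and hyp: "\<And>x. x \<in> S \<Longrightarrow> ennreal lam * emeasure M (A x) \<le> (\<integral>\<^sup>+\<omega>. h \<omega> * indicator (A x) \<omega> \<partial>M)"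
  shows "ennreal lam * measT \<sigma> S \<le> ennreal C * (\<integral>\<^sup>+\<omega>. h \<omega> \<partial>M)"
proof -
  have "ennreal lam * measT \<sigma> S = (\<integral>\<^sup>+x. ennreal lam * ennreal (\<sigma> x) \<partial>count_space S)"
    unfolding measT_def by (rule nn_integral_cmult[symmetric]) simp
  also have "\<dots> \<le> ennreal C * (\<integral>\<^sup>+\<omega>. h \<omega> \<partial>M)"
  proof (rule nn_integral_count_space_finsup)
    fix F assume F: "finite F" "F \<subseteq> S"
    define Mx where "Mx = {x\<in>F. \<forall>z\<in>F. le x z \<longrightarrow> z = x}"
    have finMx: "finite Mx" using F(1) unfolding Mx_def by simp
    have MxF: "Mx \<subseteq> F" unfolding Mx_def by auto
    have cover: "\<exists>x\<in>Mx. le y x" if yF: "y \<in> F" for y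
    proof -
      have "\<exists>x\<in>F. le y x \<and> (\<forall>z\<in>F. le x z \<longrightarrow> z = x)"
      proof (rule finite_maximal[where le=le and F=F and y=y])
        fix x y z assume "le x y" "le y z" then show "le x z" by (rule tr)
      next
        fix x y assume "le x y" "le y x" then show "x = y" by (rule an)
      next
        fix x show "le x x" by (rule rf)
      qed (use F(1) yF in auto)
      then show ?thesis unfolding Mx_def by blast
    qed
    have "(\<Sum>y\<in>F. ennreal (\<sigma> y)) \<le> (\<Sum>y\<in>F. \<Sum>x\<in>{x\<in>Mx. le y x}. ennreal (\<sigma> y))"
    proof (rule sum_mono)
      fix y assume "y \<in> F"
      then obtain x where "x \<in> Mx" "le y x" using cover by blast
      then have "x \<in> {x\<in>Mx. le y x}" by simp
      then show "ennreal (\<sigma> y) \<le> (\<Sum>x\<in>{x\<in>Mx. le y x}. ennreal (\<sigma> y))"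
        using finMx by (intro member_le_sum) auto
    qed
    also have "\<dots> = (\<Sum>x\<in>Mx. \<Sum>y\<in>{y\<in>F. le y x}. ennreal (\<sigma> y))"
      by (rule sum.swap_restrict[OF F(1) finMx])
    also have "\<dots> \<le> (\<Sum>x\<in>Mx. measT \<sigma> {y\<in>Vs. le y x})"
    proof (rule sum_mono)
      fix x assume "x \<in> Mx"
      have "(\<Sum>y\<in>{y\<in>F. le y x}. ennreal (\<sigma> y)) = measT \<sigma> {y\<in>F. le y x}"
        unfolding measT_def using F(1) by (simp add: nn_integral_count_space_finite)
      also have "\<dots> \<le> measT \<sigma> {y\<in>Vs. le y x}" using F(2) S by (intro measT_mono) auto
      finally show "(\<Sum>y\<in>{y\<in>F. le y x}. ennreal (\<sigma> y)) \<le> measT \<sigma> {y\<in>Vs. le y x}" .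
    qed
    finally have s1: "(\<Sum>y\<in>F. ennreal (\<sigma> y)) \<le> (\<Sum>x\<in>Mx. measT \<sigma> {y\<in>Vs. le y x})" .
    have s2: "ennreal lam * measT \<sigma> {y\<in>Vs. le y x} \<le> ennreal C * (\<integral>\<^sup>+\<omega>. h \<omega> * indicator (A x) \<omega> \<partial>M)"
      if "x \<in> Mx" for x
    proof -
      have xS: "x \<in> S" "x \<in> Vs" using that MxF F(2) S by auto
      have "ennreal lam * measT \<sigma> {y\<in>Vs. le y x} \<le> ennreal lam * (ennreal C * emeasure M (A x))"
        using carl[OF xS(2)] by (rule mult_left_mono) simp
      also have "\<dots> = ennreal C * (ennreal lam * emeasure M (A x))" by (simp add: ac_simps)
      also have "\<dots> \<le> ennreal C * (\<integral>\<^sup>+\<omega>. h \<omega> * indicator (A x) \<omega> \<partial>M)"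
        using hyp[OF xS(1)] by (rule mult_left_mono) simp
      finally show ?thesis .
    qed
    have dj: "disjoint_family_on A Mx"
      unfolding disjoint_family_on_def
    proof (intro ballI impI)
      fix x y assume xy: "x \<in> Mx" "y \<in> Mx" "x \<noteq> y"
      then have "\<not> le x y" "\<not> le y x" unfolding Mx_def by auto
      moreover have "x \<in> Vs" "y \<in> Vs" using xy MxF F(2) S by auto
      ultimately show "A x \<inter> A y = {}" using disj by blast
    qed
    have s3: "(\<Sum>x\<in>Mx. \<integral>\<^sup>+\<omega>. h \<omega> * indicator (A x) \<omega> \<partial>M) \<le> (\<integral>\<^sup>+\<omega>. h \<omega> \<partial>M)"
    proof -
      have "(\<Sum>x\<in>Mx. \<integral>\<^sup>+\<omega>. h \<omega> * indicator (A x) \<omega> \<partial>M) = (\<integral>\<^sup>+\<omega>. (\<Sum>x\<in>Mx. h \<omega> * indicator (A x) \<omega>) \<partial>M)"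
      proof (intro nn_integral_sum[symmetric])
        fix x assume "x \<in> Mx"
        then have [measurable]: "A x \<in> sets M" using A_sets MxF F(2) S by auto
        note hm[measurable]
        show "(\<lambda>\<omega>. h \<omega> * indicator (A x) \<omega>) \<in> borel_measurable M" by measurable
      qed
      also have "\<dots> \<le> (\<integral>\<^sup>+\<omega>. h \<omega> \<partial>M)"
      proof (rule nn_integral_mono)
        fix \<omega>
        show "(\<Sum>x\<in>Mx. h \<omega> * indicator (A x) \<omega>) \<le> h \<omega>"
        proof (cases "\<exists>x\<in>Mx. \<omega> \<in> A x")
          case True
          then obtain x0 where x0: "x0 \<in> Mx" "\<omega> \<in> A x0" by blast
          have "(\<Sum>x\<in>Mx. (\<lambda>_. h \<omega>) x * indicator (A x) \<omega>) = h \<omega>"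
            by (rule sum_indicator_disjoint_family[OF dj x0(2) finMx x0(1)])
          then show ?thesis by simp
        next
          case False
          then have "(\<Sum>x\<in>Mx. h \<omega> * indicator (A x) \<omega>) = 0"
            by (intro sum.neutral) (auto simp: indicator_def)
          then show ?thesis by simp
        qed
      qed
      finally show ?thesis .
    qed
    have "(\<Sum>y\<in>F. ennreal lam * ennreal (\<sigma> y)) = ennreal lam * (\<Sum>y\<in>F. ennreal (\<sigma> y))"
      by (simp add: sum_distrib_left)
    also have "\<dots> \<le> ennreal lam * (\<Sum>x\<in>Mx. measT \<sigma> {y\<in>Vs. le y x})" using s1 by (rule mult_left_mono) simp
    also have "\<dots> = (\<Sum>x\<in>Mx. ennreal lam * measT \<sigma> {y\<in>Vs. le y x})" by (simp add: sum_distrib_left)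
    also have "\<dots> \<le> (\<Sum>x\<in>Mx. ennreal C * (\<integral>\<^sup>+\<omega>. h \<omega> * indicator (A x) \<omega> \<partial>M))" using s2 by (rule sum_mono)
    also have "\<dots> = ennreal C * (\<Sum>x\<in>Mx. \<integral>\<^sup>+\<omega>. h \<omega> * indicator (A x) \<omega> \<partial>M)" by (simp add: sum_distrib_left)
    also have "\<dots> \<le> ennreal C * (\<integral>\<^sup>+\<omega>. h \<omega> \<partial>M)" using s3 by (rule mult_left_mono) simp
    finally show "(\<Sum>y\<in>F. ennreal lam * ennreal (\<sigma> y)) \<le> ennreal C * (\<integral>\<^sup>+\<omega>. h \<omega> \<partial>M)" .
  qed
  finally show ?thesis .
qed


lemma dyadic_lower:
  fixes a p :: real
  assumes a: "0 \<le> a" and p: "0 < p"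
  shows "ennreal (a powr p) \<le> ennreal (2 powr p) *
    (\<integral>\<^sup>+j. ennreal (2 powr (real_of_int j * p)) * indicator {j. 2 powr real_of_int j < a} j \<partial>count_space UNIV)"
proof (cases "a = 0")
  case True then show ?thesis by simp
next
  case False
  then have a0: "0 < a" using a by simp
  define K where "K = \<lceil>log 2 a\<rceil> - 1"
  have K1: "real_of_int K < log 2 a" unfolding K_def by linarith
  have K2: "log 2 a \<le> real_of_int K + 1" unfolding K_def by linarith
  have aK: "2 powr real_of_int K < a"
  proof -
    have "2 powr real_of_int K < 2 powr (log 2 a)" using K1 by simp
    then show ?thesis using a0 by simp
  qed
  have aK2: "a \<le> 2 powr (real_of_int K + 1)"
  proof -
    have "2 powr (log 2 a) \<le> 2 powr (real_of_int K + 1)" using K2 by simp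
    then show ?thesis using a0 by simp
  qed
  have "a powr p \<le> (2 powr (real_of_int K + 1)) powr p" using aK2 a p by (intro powr_mono2) auto
  also have "\<dots> = 2 powr p * 2 powr (real_of_int K * p)"
    by (simp add: powr_powr powr_add[symmetric] algebra_simps)
  finally have 1: "ennreal (a powr p) \<le> ennreal (2 powr p) * ennreal (2 powr (real_of_int K * p))"
    by (simp add: ennreal_mult'[symmetric] ennreal_leI)
  have "ennreal (2 powr (real_of_int K * p)) =
      ennreal (2 powr (real_of_int K * p)) * indicator {j. 2 powr real_of_int j < a} K"
    using aK by simp
  also have "\<dots> \<le> (\<integral>\<^sup>+j. ennreal (2 powr (real_of_int j * p)) * indicator {j. 2 powr real_of_int j < a} j \<partial>count_space UNIV)"
    by (rule nn_integral_ge_point) simp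
  finally have 2: "ennreal (2 powr (real_of_int K * p)) \<le> (\<integral>\<^sup>+j. ennreal (2 powr (real_of_int j * p)) * indicator {j. 2 powr real_of_int j < a} j \<partial>count_space UNIV)" .
  show ?thesis using 1 mult_left_mono[OF 2, of "ennreal (2 powr p)"] by (meson order_trans zero_le)
qed

definition cp :: "real \<Rightarrow> real" where
  "cp p = 2 powr (p - 1) / (1 - 2 powr (1 - p))"

lemma cp_pos: "1 < p \<Longrightarrow> 0 < cp p"
proof -
  assume p: "1 < p"
  have "2 powr (1 - p) < 2 powr 0" using p by (intro powr_less_mono) auto
  then have "2 powr (1 - p) < 1" by simp
  then show ?thesis unfolding cp_def by simp
qed

lemma dyadic_upper:
  fixes b p :: real
  assumes b: "0 \<le> b" and p: "1 < p"
  shows "(\<integral>\<^sup>+j. ennreal (2 powr (real_of_int j * (p - 1))) * indicator {j. 2 powr (real_of_int j - 1) < b} j \<partial>count_space UNIV)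
     \<le> ennreal (cp p) * ennreal (b powr (p - 1))"
proof (cases "b = 0")
  case True
  have "indicator {j. 2 powr (real_of_int j - 1) < b} j = (0::ennreal)" for j
    using True by (simp add: indicator_def)
  then show ?thesis by simp
next
  case False
  then have b0: "0 < b" using b by simp
  define J where "J = \<lceil>log 2 b\<rceil>"
  have J1: "real_of_int J - 1 < log 2 b" unfolding J_def by linarith
  have J2: "log 2 b \<le> real_of_int J" unfolding J_def by linarith
  have jJ: "j \<le> J" if "2 powr (real_of_int j - 1) < b" for j
  proof (rule ccontr)
    assume "\<not> j \<le> J"
    then have "log 2 b \<le> real_of_int j - 1" using J2 by linarith
    then have "2 powr (log 2 b) \<le> 2 powr (real_of_int j - 1)" by simp
    then show False using that b0 by simp
  qed
  have JB: "2 powr real_of_int J < 2 * b"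
  proof -
    have "2 powr real_of_int J < 2 powr (log 2 b + 1)" using J1 by simp
    also have "\<dots> = 2 * b" using b0 by (simp add: powr_add)
    finally show ?thesis .
  qed
  define r :: real where "r = 2 powr (1 - p)"
  have r: "0 < r" "r < 1"
  proof -
    show "0 < r" unfolding r_def by simp
    have "2 powr (1 - p) < 2 powr 0" using p by (intro powr_less_mono) auto
    then show "r < 1" unfolding r_def by simp
  qed
  define c where "c = 2 powr (real_of_int J * (p - 1))"
  have c0: "0 < c" unfolding c_def by simp
  have trm: "2 powr (real_of_int (J - int n) * (p - 1)) = c * r ^ n" for n
  proof -
    have "r ^ n = 2 powr ((1 - p) * real n)" unfolding r_def by (simp add: powr_realpow[symmetric] powr_powr)
    then have "c * r ^ n = 2 powr (real_of_int J * (p - 1) + (1 - p) * real n)"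
      unfolding c_def by (simp add: powr_add)
    then show ?thesis by (simp add: algebra_simps)
  qed
  have "(\<integral>\<^sup>+j. ennreal (2 powr (real_of_int j * (p - 1))) * indicator {j. 2 powr (real_of_int j - 1) < b} j \<partial>count_space UNIV)
      \<le> (\<integral>\<^sup>+j. ennreal (2 powr (real_of_int j * (p - 1))) * indicator {..J} j \<partial>count_space UNIV)"
    using jJ by (intro nn_integral_mono) (auto split: split_indicator)
  also have "\<dots> = (\<integral>\<^sup>+j. ennreal (2 powr (real_of_int j * (p - 1))) \<partial>count_space {..J})"
    by (rule nn_integral_count_space_indicator[symmetric]) (simp add: NO_MATCH_def)
  also have "\<dots> = (\<integral>\<^sup>+n. ennreal (2 powr (real_of_int (J - int n) * (p - 1))) \<partial>count_space UNIV)"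
  proof (rule nn_integral_bij_count_space[symmetric])
    show "bij_betw (\<lambda>n. J - int n) UNIV {..J}"
      unfolding bij_betw_def
    proof
      show "inj (\<lambda>n. J - int n)" by (auto simp: inj_def)
      show "range (\<lambda>n. J - int n) = {..J}"
      proof
        show "range (\<lambda>n. J - int n) \<subseteq> {..J}" by auto
        show "{..J} \<subseteq> range (\<lambda>n. J - int n)"
        proof
          fix j assume "j \<in> {..J}"
          then have "j = J - int (nat (J - j))" by simp
          then show "j \<in> range (\<lambda>n. J - int n)" by blast
        qed
      qed
    qed
  qed
  also have "\<dots> = (\<Sum>n. ennreal (c * r ^ n))"
    by (simp only: nn_integral_count_space_nat trm)
  also have "\<dots> = ennreal (c / (1 - r))"
  proof -
    have "(\<lambda>n. c * r ^ n) sums (c * (1 / (1 - r)))" using r by (intro sums_mult geometric_sums) simp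
    then have "(\<lambda>n. ennreal (c * r ^ n)) sums ennreal (c / (1 - r))"
      using r c0 by (subst sums_ennreal) auto
    then show ?thesis by (rule sums_unique[symmetric])
  qed
  also have "\<dots> \<le> ennreal (cp p * b powr (p - 1))"
  proof (rule ennreal_leI)
    have "c = (2 powr real_of_int J) powr (p - 1)" unfolding c_def by (simp add: powr_powr)
    also have "\<dots> \<le> (2 * b) powr (p - 1)" using JB p by (intro powr_mono2) auto
    also have "\<dots> = 2 powr (p - 1) * b powr (p - 1)" using b0 by (simp add: powr_mult)
    finally have "c \<le> 2 powr (p - 1) * b powr (p - 1)" .
    then have "c / (1 - r) \<le> 2 powr (p - 1) * b powr (p - 1) / (1 - r)" using r by (intro divide_right_mono) auto
    then show "c / (1 - r) \<le> cp p * b powr (p - 1)" unfolding cp_def r_def by simp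
  qed
  also have "\<dots> = ennreal (cp p) * ennreal (b powr (p - 1))"
    using cp_pos[OF p] by (simp add: ennreal_mult)
  finally show ?thesis .
qed


lemma nn_integral_count_space_restrict:
  fixes f :: "'a \<Rightarrow> ennreal"
  assumes "S \<subseteq> V"
  shows "(\<integral>\<^sup>+x. f x * indicator S x \<partial>count_space V) = (\<integral>\<^sup>+x. f x \<partial>count_space S)"
proof -
  have "(\<integral>\<^sup>+x. f x * indicator S x \<partial>count_space V) = (\<integral>\<^sup>+x. f x * indicator S x * indicator V x \<partial>count_space UNIV)"
    by (rule nn_integral_count_space_indicator) (simp add: NO_MATCH_def)
  also have "\<dots> = (\<integral>\<^sup>+x. f x * indicator S x \<partial>count_space UNIV)"
    using assms by (intro nn_integral_cong) (auto split: split_indicator)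
  also have "\<dots> = (\<integral>\<^sup>+x. f x \<partial>count_space S)"
    by (rule nn_integral_count_space_indicator[symmetric]) (simp add: NO_MATCH_def)
  finally show ?thesis .
qed

locale embed_setting =
  fixes le :: "'v \<Rightarrow> 'v \<Rightarrow> bool" and M :: "'b measure" and A :: "'v \<Rightarrow> 'b set" and \<sigma> :: "'v \<Rightarrow> real"
    and G :: "'v \<Rightarrow> real" and F :: "'b \<Rightarrow> real" and Vs :: "'v set" and C :: real
  assumes tr: "\<And>x y z. le x y \<Longrightarrow> le y z \<Longrightarrow> le x z"
    and an: "\<And>x y. le x y \<Longrightarrow> le y x \<Longrightarrow> x = y"
    and rf: "\<And>x. le x x"
    and A_sets: "\<And>x. x \<in> Vs \<Longrightarrow> A x \<in> sets M"
    and disj: "\<And>x y. x \<in> Vs \<Longrightarrow> y \<in> Vs \<Longrightarrow> \<not> le x y \<Longrightarrow> \<not> le y x \<Longrightarrow> A x \<inter> A y = {}"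
    and carl: "\<And>x. x \<in> Vs \<Longrightarrow> measT \<sigma> {y\<in>Vs. le y x} \<le> ennreal C * emeasure M (A x)"
    and Fm: "F \<in> borel_measurable M"
    and fin: "\<And>x. x \<in> Vs \<Longrightarrow> emeasure M (A x) < \<infinity>"
    and val: "\<And>x. x \<in> Vs \<Longrightarrow> ennreal \<bar>G x\<bar> * emeasure M (A x) \<le> (\<integral>\<^sup>+\<omega>. ennreal \<bar>F \<omega>\<bar> * indicator (A x) \<omega> \<partial>M)"
begin

lemma maxl:
  assumes "S \<subseteq> Vs" "h \<in> borel_measurable M"
    "\<And>x. x \<in> S \<Longrightarrow> ennreal lam * emeasure M (A x) \<le> (\<integral>\<^sup>+\<omega>. h \<omega> * indicator (A x) \<omega> \<partial>M)"
  shows "ennreal lam * measT \<sigma> S \<le> ennreal C * (\<integral>\<^sup>+\<omega>. h \<omega> \<partial>M)"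
proof (rule maximal_lemma[where le=le and Vs=Vs and A=A and M=M and \<sigma>=\<sigma> and h=h])
  fix x y z assume "le x y" "le y z" then show "le x z" by (rule tr)
next
  fix x y assume "le x y" "le y x" then show "x = y" by (rule an)
next
  fix x show "le x x" by (rule rf)
qed (use A_sets disj carl assms in auto)

lemma weak:
  assumes t: "0 < t"
  shows "ennreal t * measT \<sigma> {x\<in>Vs. t < \<bar>G x\<bar>} \<le> ennreal C * (\<integral>\<^sup>+\<omega>. ennreal \<bar>F \<omega>\<bar> \<partial>M)"
proof (rule maxl)
  show "(\<lambda>\<omega>. ennreal \<bar>F \<omega>\<bar>) \<in> borel_measurable M" using Fm by measurable
  fix x assume x: "x \<in> {x\<in>Vs. t < \<bar>G x\<bar>}"
  have "ennreal t * emeasure M (A x) \<le> ennreal \<bar>G x\<bar> * emeasure M (A x)"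
    using x t by (intro mult_right_mono ennreal_leI) auto
  also have "\<dots> \<le> (\<integral>\<^sup>+\<omega>. ennreal \<bar>F \<omega>\<bar> * indicator (A x) \<omega> \<partial>M)" using x val by auto
  finally show "ennreal t * emeasure M (A x) \<le> (\<integral>\<^sup>+\<omega>. ennreal \<bar>F \<omega>\<bar> * indicator (A x) \<omega> \<partial>M)" .
qed auto

lemma level_step:
  fixes j :: int
  defines "t \<equiv> 2 powr (real_of_int j - 1)"
  shows "ennreal t * measT \<sigma> {x\<in>Vs. 2 powr real_of_int j < \<bar>G x\<bar>}
    \<le> ennreal C * (\<integral>\<^sup>+\<omega>. ennreal \<bar>F \<omega>\<bar> * indicator {\<omega>. t < \<bar>F \<omega>\<bar>} \<omega> \<partial>M)"
proof (rule maxl)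
  note Fm[measurable]
  show "(\<lambda>\<omega>. ennreal \<bar>F \<omega>\<bar> * indicator {\<omega>. t < \<bar>F \<omega>\<bar>} \<omega>) \<in> borel_measurable M"
  proof -
    have "(\<lambda>\<omega>. ennreal \<bar>F \<omega>\<bar> * indicator {\<omega>. t < \<bar>F \<omega>\<bar>} \<omega>) = (\<lambda>\<omega>. if t < \<bar>F \<omega>\<bar> then ennreal \<bar>F \<omega>\<bar> else 0)"
      by (auto simp: indicator_def)
    also have "\<dots> \<in> borel_measurable M" by measurable
    finally show ?thesis .
  qed
  fix x assume x: "x \<in> {x\<in>Vs. 2 powr real_of_int j < \<bar>G x\<bar>}"
  then have xV: "x \<in> Vs" by simp
  have [measurable]: "A x \<in> sets M" using A_sets xV by simp
  have t0: "0 < t" unfolding t_def by simp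
  define m where "m = emeasure M (A x)"
  have mfin: "m < \<infinity>" using fin xV unfolding m_def by simp
  define X where "X = (\<integral>\<^sup>+\<omega>. (if t < \<bar>F \<omega>\<bar> then ennreal \<bar>F \<omega>\<bar> * indicator (A x) \<omega> else 0) \<partial>M)"
  define Y where "Y = (\<integral>\<^sup>+\<omega>. (if \<bar>F \<omega>\<bar> \<le> t then ennreal \<bar>F \<omega>\<bar> * indicator (A x) \<omega> else 0) \<partial>M)"
  have m1: "(\<lambda>\<omega>. if t < \<bar>F \<omega>\<bar> then ennreal \<bar>F \<omega>\<bar> * indicator (A x) \<omega> else 0) \<in> borel_measurable M"
    by measurable
  have m2: "(\<lambda>\<omega>. if \<bar>F \<omega>\<bar> \<le> t then ennreal \<bar>F \<omega>\<bar> * indicator (A x) \<omega> else 0) \<in> borel_measurable M"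
    by measurable
  have XY: "(\<integral>\<^sup>+\<omega>. ennreal \<bar>F \<omega>\<bar> * indicator (A x) \<omega> \<partial>M) = X + Y"
  proof -
    have "(\<integral>\<^sup>+\<omega>. ennreal \<bar>F \<omega>\<bar> * indicator (A x) \<omega> \<partial>M) =
      (\<integral>\<^sup>+\<omega>. (if t < \<bar>F \<omega>\<bar> then ennreal \<bar>F \<omega>\<bar> * indicator (A x) \<omega> else 0) +
         (if \<bar>F \<omega>\<bar> \<le> t then ennreal \<bar>F \<omega>\<bar> * indicator (A x) \<omega> else 0) \<partial>M)"
      by (intro nn_integral_cong) simp
    also have "\<dots> = X + Y" unfolding X_def Y_def by (rule nn_integral_add[OF m1 m2])
    finally show ?thesis .
  qed
  have Yle: "Y \<le> ennreal t * m"
  proof -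
    have "Y \<le> (\<integral>\<^sup>+\<omega>. ennreal t * indicator (A x) \<omega> \<partial>M)"
      unfolding Y_def by (intro nn_integral_mono) (simp add: indicator_def ennreal_leI)
    also have "\<dots> = ennreal t * m" unfolding m_def by (simp add: nn_integral_cmult_indicator)
    finally show ?thesis .
  qed
  have tt: "2 * t = 2 powr real_of_int j" unfolding t_def by (simp add: powr_diff)
  have "ennreal (2 * t) * m \<le> ennreal \<bar>G x\<bar> * m"
  proof (rule mult_right_mono)
    have "2 powr real_of_int j < \<bar>G x\<bar>" using x by simp
    then show "ennreal (2 * t) \<le> ennreal \<bar>G x\<bar>" unfolding tt by (intro ennreal_leI) simp
  qed simp
  also have "\<dots> \<le> X + Y" using val[OF xV] unfolding m_def XY .
  also have "\<dots> \<le> X + ennreal t * m" using Yle by (rule add_left_mono)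
  finally have 1: "ennreal (2 * t) * m \<le> X + ennreal t * m" .
  have "ennreal (2 * t) = ennreal t + ennreal t" using t0 ennreal_plus[of t t] by (simp only: mult_2)
  then have "ennreal (2 * t) * m = ennreal t * m + ennreal t * m" by (simp only: distrib_right)
  then have 2: "ennreal t * m + ennreal t * m \<le> ennreal t * m + X" using 1 by (metis add.commute)
  have 3: "ennreal t * m \<noteq> \<infinity>"
    using mfin by (simp add: ennreal_mult_less_top less_top)
  have "ennreal t * m \<le> X" using 2 3 ennreal_add_left_cancel_le by blast
  also have "X = (\<integral>\<^sup>+\<omega>. ennreal \<bar>F \<omega>\<bar> * indicator {\<omega>. t < \<bar>F \<omega>\<bar>} \<omega> * indicator (A x) \<omega> \<partial>M)"
    unfolding X_def by (intro nn_integral_cong) (simp add: indicator_def)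
  finally show "ennreal t * emeasure M (A x) \<le> (\<integral>\<^sup>+\<omega>. ennreal \<bar>F \<omega>\<bar> * indicator {\<omega>. t < \<bar>F \<omega>\<bar>} \<omega> * indicator (A x) \<omega> \<partial>M)"
    unfolding m_def .
qed auto

end


context embed_setting begin

lemma strong:
  assumes p: "1 < p" and C0: "0 \<le> C"
  shows "(\<integral>\<^sup>+x. ennreal (\<bar>G x\<bar> powr p) * ennreal (\<sigma> x) \<partial>count_space Vs)
     \<le> ennreal (2 powr p * 2 * cp p * C) * (\<integral>\<^sup>+\<omega>. ennreal (\<bar>F \<omega>\<bar> powr p) \<partial>M)"
proof -
  note Fm[measurable]
  define S where "S j = {x\<in>Vs. 2 powr real_of_int j < \<bar>G x\<bar>}" for j :: int
  define h where "h j \<omega> = (if 2 powr (real_of_int j - 1) < \<bar>F \<omega>\<bar> then ennreal \<bar>F \<omega>\<bar> else 0)" for j :: int and \<omega>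
  define c where "c = ennreal (2 powr p)"
  define e where "e j = ennreal (2 powr (real_of_int j * p))" for j :: int
  define d where "d j = ennreal (2 powr (real_of_int j * (p - 1)))" for j :: int
  have p0: "0 < p" using p by simp
  have hm: "h j \<in> borel_measurable M" for j unfolding h_def by measurable
  have hm2: "(\<lambda>\<omega>. d j * h j \<omega>) \<in> borel_measurable M" for j unfolding h_def by measurable
  have "(\<integral>\<^sup>+x. ennreal (\<bar>G x\<bar> powr p) * ennreal (\<sigma> x) \<partial>count_space Vs)
      \<le> (\<integral>\<^sup>+x. (\<integral>\<^sup>+j. c * e j * indicator {j. 2 powr real_of_int j < \<bar>G x\<bar>} j * ennreal (\<sigma> x) \<partial>count_space UNIV) \<partial>count_space Vs)"
  proof (rule nn_integral_mono)
    fix x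
    have "ennreal (\<bar>G x\<bar> powr p) * ennreal (\<sigma> x) \<le> (c * (\<integral>\<^sup>+j. e j * indicator {j. 2 powr real_of_int j < \<bar>G x\<bar>} j \<partial>count_space UNIV)) * ennreal (\<sigma> x)"
      unfolding c_def e_def by (rule mult_right_mono[OF dyadic_lower[OF _ p0]]) simp_all
    also have "\<dots> = (\<integral>\<^sup>+j. c * e j * indicator {j. 2 powr real_of_int j < \<bar>G x\<bar>} j * ennreal (\<sigma> x) \<partial>count_space UNIV)"
    proof -
      have "(\<integral>\<^sup>+j. c * e j * indicator {j. 2 powr real_of_int j < \<bar>G x\<bar>} j * ennreal (\<sigma> x) \<partial>count_space UNIV)
          = (\<integral>\<^sup>+j. c * (e j * indicator {j. 2 powr real_of_int j < \<bar>G x\<bar>} j) \<partial>count_space UNIV) * ennreal (\<sigma> x)"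
        by (subst nn_integral_multc[symmetric]) (simp_all add: mult.assoc)
      also have "\<dots> = (c * (\<integral>\<^sup>+j. e j * indicator {j. 2 powr real_of_int j < \<bar>G x\<bar>} j \<partial>count_space UNIV)) * ennreal (\<sigma> x)"
        by (subst nn_integral_cmult) simp_all
      finally show ?thesis by simp
    qed
    finally show "ennreal (\<bar>G x\<bar> powr p) * ennreal (\<sigma> x) \<le> (\<integral>\<^sup>+j. c * e j * indicator {j. 2 powr real_of_int j < \<bar>G x\<bar>} j * ennreal (\<sigma> x) \<partial>count_space UNIV)" .
  qed
  also have "\<dots> = (\<integral>\<^sup>+j. (\<integral>\<^sup>+x. c * e j * indicator {j. 2 powr real_of_int j < \<bar>G x\<bar>} j * ennreal (\<sigma> x) \<partial>count_space Vs) \<partial>count_space UNIV)"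
    by (rule nn_integral_count_space_nn_integral) simp_all
  also have "\<dots> = (\<integral>\<^sup>+j. c * e j * measT \<sigma> (S j) \<partial>count_space UNIV)"
  proof (rule nn_integral_cong)
    fix j :: int
    have "(\<integral>\<^sup>+x. c * e j * indicator {j. 2 powr real_of_int j < \<bar>G x\<bar>} j * ennreal (\<sigma> x) \<partial>count_space Vs)
        = (\<integral>\<^sup>+x. (c * e j) * (ennreal (\<sigma> x) * indicator (S j) x) \<partial>count_space Vs)"
      by (intro nn_integral_cong) (auto simp: S_def indicator_def)
    also have "\<dots> = (c * e j) * (\<integral>\<^sup>+x. ennreal (\<sigma> x) * indicator (S j) x \<partial>count_space Vs)"
      by (rule nn_integral_cmult) simp
    also have "\<dots> = c * e j * measT \<sigma> (S j)"
      unfolding measT_def by (subst nn_integral_count_space_restrict) (auto simp: S_def)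
    finally show "(\<integral>\<^sup>+x. c * e j * indicator {j. 2 powr real_of_int j < \<bar>G x\<bar>} j * ennreal (\<sigma> x) \<partial>count_space Vs) = c * e j * measT \<sigma> (S j)" .
  qed
  also have "\<dots> \<le> (\<integral>\<^sup>+j. (c * 2 * ennreal C) * (\<integral>\<^sup>+\<omega>. d j * h j \<omega> \<partial>M) \<partial>count_space UNIV)"
  proof (rule nn_integral_mono)
    fix j :: int
    define t where "t = 2 powr (real_of_int j - 1)"
    have t0: "0 < t" unfolding t_def by simp
    have ej: "e j = 2 * d j * ennreal t"
    proof -
      have "2 powr (real_of_int j * p) = 2 powr (1 + real_of_int j * (p - 1) + (real_of_int j - 1))"
        by (rule arg_cong[where f="\<lambda>x. 2 powr x"]) (simp add: algebra_simps)
      also have "\<dots> = 2 * 2 powr (real_of_int j * (p - 1)) * t"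
        unfolding t_def by (simp add: powr_add powr_diff)
      finally have "2 powr (real_of_int j * p) = 2 * 2 powr (real_of_int j * (p - 1)) * t" .
      moreover have "ennreal (2 * (2 powr (real_of_int j * (p - 1)) * t)) = 2 * (ennreal (2 powr (real_of_int j * (p - 1))) * ennreal t)"
        using t0 by (simp add: ennreal_mult)
      ultimately show ?thesis unfolding e_def d_def by (simp add: mult.assoc)
    qed
    have ls: "ennreal t * measT \<sigma> (S j) \<le> ennreal C * (\<integral>\<^sup>+\<omega>. h j \<omega> \<partial>M)"
    proof -
      have "ennreal t * measT \<sigma> (S j) \<le> ennreal C * (\<integral>\<^sup>+\<omega>. ennreal \<bar>F \<omega>\<bar> * indicator {\<omega>. t < \<bar>F \<omega>\<bar>} \<omega> \<partial>M)"
        unfolding S_def t_def by (rule level_step)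
      also have "(\<integral>\<^sup>+\<omega>. ennreal \<bar>F \<omega>\<bar> * indicator {\<omega>. t < \<bar>F \<omega>\<bar>} \<omega> \<partial>M) = (\<integral>\<^sup>+\<omega>. h j \<omega> \<partial>M)"
        unfolding h_def t_def by (intro nn_integral_cong) (simp add: indicator_def)
      finally show ?thesis .
    qed
    have "c * e j * measT \<sigma> (S j) = (c * 2 * d j) * (ennreal t * measT \<sigma> (S j))"
      unfolding ej by (simp add: ac_simps)
    also have "\<dots> \<le> (c * 2 * d j) * (ennreal C * (\<integral>\<^sup>+\<omega>. h j \<omega> \<partial>M))"
      by (rule mult_left_mono[OF ls]) simp
    also have "\<dots> = (c * 2 * ennreal C) * (d j * (\<integral>\<^sup>+\<omega>. h j \<omega> \<partial>M))" by (simp add: ac_simps)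
    also have "\<dots> = (c * 2 * ennreal C) * (\<integral>\<^sup>+\<omega>. d j * h j \<omega> \<partial>M)"
      by (subst nn_integral_cmult[OF hm]) simp
    finally show "c * e j * measT \<sigma> (S j) \<le> (c * 2 * ennreal C) * (\<integral>\<^sup>+\<omega>. d j * h j \<omega> \<partial>M)" .
  qed
  also have "\<dots> = (c * 2 * ennreal C) * (\<integral>\<^sup>+j. (\<integral>\<^sup>+\<omega>. d j * h j \<omega> \<partial>M) \<partial>count_space UNIV)"
    by (rule nn_integral_cmult) simp
  also have "(\<integral>\<^sup>+j. (\<integral>\<^sup>+\<omega>. d j * h j \<omega> \<partial>M) \<partial>count_space UNIV) = (\<integral>\<^sup>+\<omega>. (\<integral>\<^sup>+j. d j * h j \<omega> \<partial>count_space UNIV) \<partial>M)"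
    by (rule nn_integral_count_space_nn_integral[symmetric]) (simp_all add: hm2)
  also have "\<dots> \<le> (\<integral>\<^sup>+\<omega>. ennreal (cp p) * ennreal (\<bar>F \<omega>\<bar> powr p) \<partial>M)"
  proof (rule nn_integral_mono)
    fix \<omega>
    define b where "b = \<bar>F \<omega>\<bar>"
    have b0: "0 \<le> b" unfolding b_def by simp
    have "(\<integral>\<^sup>+j. d j * h j \<omega> \<partial>count_space UNIV)
       = (\<integral>\<^sup>+j. ennreal b * (ennreal (2 powr (real_of_int j * (p - 1))) * indicator {j. 2 powr (real_of_int j - 1) < b} j) \<partial>count_space UNIV)"
      unfolding d_def h_def b_def by (intro nn_integral_cong) (simp add: indicator_def mult.commute)
    also have "\<dots> = ennreal b * (\<integral>\<^sup>+j. ennreal (2 powr (real_of_int j * (p - 1))) * indicator {j. 2 powr (real_of_int j - 1) < b} j \<partial>count_space UNIV)"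
      by (rule nn_integral_cmult) simp
    also have "\<dots> \<le> ennreal b * (ennreal (cp p) * ennreal (b powr (p - 1)))"
      by (rule mult_left_mono[OF dyadic_upper[OF b0 p]]) simp
    also have "\<dots> = ennreal (cp p) * ennreal (b powr p)"
    proof -
      have "b * b powr (p - 1) = b powr p"
      proof (cases "b = 0")
        case True then show ?thesis using p by simp
      next
        case False
        then have "b powr p = b powr (1 + (p - 1))" by simp
        also have "\<dots> = b * b powr (p - 1)" using False b0 by (subst powr_add) simp
        finally show ?thesis by simp
      qed
      then show ?thesis using b0 cp_pos[OF p]
        by (simp add: ennreal_mult[symmetric] mult.left_commute)
    qed
    finally show "(\<integral>\<^sup>+j. d j * h j \<omega> \<partial>count_space UNIV) \<le> ennreal (cp p) * ennreal (\<bar>F \<omega>\<bar> powr p)"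
      unfolding b_def .
  qed
  also have "\<dots> = ennreal (cp p) * (\<integral>\<^sup>+\<omega>. ennreal (\<bar>F \<omega>\<bar> powr p) \<partial>M)"
    by (rule nn_integral_cmult) measurable
  finally have fin: "(\<integral>\<^sup>+x. ennreal (\<bar>G x\<bar> powr p) * ennreal (\<sigma> x) \<partial>count_space Vs)
     \<le> c * 2 * ennreal C * (ennreal (cp p) * (\<integral>\<^sup>+\<omega>. ennreal (\<bar>F \<omega>\<bar> powr p) \<partial>M))"
    by (simp add: mult_left_mono)
  have "c * 2 * ennreal C * ennreal (cp p) = ennreal (2 powr p * 2 * cp p * C)"
  proof -
    have "ennreal (2 powr p * 2 * cp p * C) = ennreal (2 powr p) * ennreal 2 * ennreal (cp p) * ennreal C"
      using C0 cp_pos[OF p] by (simp add: ennreal_mult)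
    then show ?thesis unfolding c_def by (simp add: ac_simps)
  qed
  then have "c * 2 * ennreal C * (ennreal (cp p) * (\<integral>\<^sup>+\<omega>. ennreal (\<bar>F \<omega>\<bar> powr p) \<partial>M))
      = ennreal (2 powr p * 2 * cp p * C) * (\<integral>\<^sup>+\<omega>. ennreal (\<bar>F \<omega>\<bar> powr p) \<partial>M)"
    by (metis mult.assoc)
  then show ?thesis using fin by simp
qed

end


locale main_setting = tree_setting E ws base for E :: "'v \<Rightarrow> 'v \<Rightarrow> bool" and ws base +
  fixes \<nu> :: "(nat \<Rightarrow> 'v) measure" and \<sigma> :: "'v \<Rightarrow> real"
  assumes lf: "locally_finite E"
    and nu_sets: "sets \<nu> = sigma_sets (bdry E base ws) (range (sectorB E base ws))"
    and nu_pos: "\<And>x. 0 < emeasure \<nu> (sectorB E base ws x)"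
    and nu_fin: "\<And>x. emeasure \<nu> (sectorB E base ws x) < \<infinity>"
    and sigma_nonneg: "\<And>x. 0 \<le> \<sigma> x"
begin

abbreviation B where "B \<equiv> sectorB E base ws"
abbreviation P where "P \<equiv> poisson E base ws \<nu>"
abbreviation m where "m \<equiv> m_nu E base ws \<nu>"

lemma B_sets[measurable]: "B x \<in> sets \<nu>"
  using nu_sets by (auto intro: sigma_sets.Basic)

lemma m_ennreal: "ennreal (m x) = emeasure \<nu> (B x)"
  unfolding m_nu_def using nu_fin[of x] by (simp add: emeasure_eq_ennreal_measure less_top)

lemma m_pos: "0 < m x"
  using nu_pos[of x] m_ennreal[of x] by (metis ennreal_less_zero_iff)

lemma P_mult: "P f x * m x = (LINT \<omega>:B x|\<nu>. f \<omega>)"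
  unfolding poisson_def using m_pos[of x] by simp

lemma val_nu: "ennreal \<bar>P f x\<bar> * emeasure \<nu> (B x) \<le> (\<integral>\<^sup>+\<omega>. ennreal \<bar>f \<omega>\<bar> * indicator (B x) \<omega> \<partial>\<nu>)"
proof -
  have "ennreal \<bar>P f x\<bar> * emeasure \<nu> (B x) = ennreal \<bar>LINT \<omega>:B x|\<nu>. f \<omega>\<bar>"
    using m_pos[of x] P_mult[of f x] m_ennreal[of x]
    by (metis abs_mult abs_of_pos ennreal_mult' abs_ge_zero)
  also have "\<dots> \<le> (\<integral>\<^sup>+\<omega>. ennreal \<bar>f \<omega>\<bar> * indicator (B x) \<omega> \<partial>\<nu>)"
  proof (cases "integrable \<nu> (\<lambda>\<omega>. indicator (B x) \<omega> *\<^sub>R f \<omega>)")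
    case True
    have "ennreal \<bar>LINT \<omega>:B x|\<nu>. f \<omega>\<bar> \<le> (\<integral>\<^sup>+\<omega>. norm (indicator (B x) \<omega> *\<^sub>R f \<omega>) \<partial>\<nu>)"
      unfolding set_lebesgue_integral_def using integral_norm_bound_ennreal[OF True] by simp
    also have "\<dots> = (\<integral>\<^sup>+\<omega>. ennreal \<bar>f \<omega>\<bar> * indicator (B x) \<omega> \<partial>\<nu>)"
      by (intro nn_integral_cong) (simp add: indicator_def)
    finally show ?thesis .
  next
    case False
    then have "(LINT \<omega>:B x|\<nu>. f \<omega>) = 0" unfolding set_lebesgue_integral_def
      by (rule not_integrable_integral_eq)
    then show ?thesis by simp
  qed
  finally show ?thesis .
qed

lemma Lp_set_integrable:
  assumes p: "1 \<le> p" and f: "in_Lp \<nu> p f"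
  shows "set_integrable \<nu> (B x) f"
  unfolding set_integrable_def
proof (rule integrableI_bounded)
  have fm[measurable]: "f \<in> borel_measurable \<nu>" using f unfolding in_Lp_def by simp
  show "(\<lambda>\<omega>. indicator (B x) \<omega> *\<^sub>R f \<omega>) \<in> borel_measurable \<nu>" by measurable
  have "(\<integral>\<^sup>+\<omega>. ennreal (norm (indicator (B x) \<omega> *\<^sub>R f \<omega>)) \<partial>\<nu>)
      \<le> (\<integral>\<^sup>+\<omega>. indicator (B x) \<omega> + ennreal (\<bar>f \<omega>\<bar> powr p) \<partial>\<nu>)"
  proof (rule nn_integral_mono)
    fix \<omega>
    have "\<bar>f \<omega>\<bar> \<le> 1 + \<bar>f \<omega>\<bar> powr p"
    proof (cases "\<bar>f \<omega>\<bar> \<le> 1")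
      case True then show ?thesis using powr_ge_zero[of "\<bar>f \<omega>\<bar>" p] by linarith
    next
      case False
      then have "\<bar>f \<omega>\<bar> powr 1 \<le> \<bar>f \<omega>\<bar> powr p" using p by (intro powr_mono) auto
      then show ?thesis using False by simp
    qed
    then have "ennreal \<bar>f \<omega>\<bar> \<le> ennreal (1 + \<bar>f \<omega>\<bar> powr p)" by (rule ennreal_leI)
    also have "\<dots> = 1 + ennreal (\<bar>f \<omega>\<bar> powr p)" by (simp add: ennreal_plus)
    finally have *: "ennreal \<bar>f \<omega>\<bar> \<le> 1 + ennreal (\<bar>f \<omega>\<bar> powr p)" .
    show "ennreal (norm (indicator (B x) \<omega> *\<^sub>R f \<omega>)) \<le> indicator (B x) \<omega> + ennreal (\<bar>f \<omega>\<bar> powr p)"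
      using * by (cases "\<omega> \<in> B x") auto
  qed
  also have "\<dots> = emeasure \<nu> (B x) + Lp_pow \<nu> p f"
    unfolding Lp_pow_def by (subst nn_integral_add) auto
  also have "\<dots> < \<infinity>" using nu_fin[of x] f unfolding in_Lp_def by simp
  finally show "(\<integral>\<^sup>+\<omega>. ennreal (norm (indicator (B x) \<omega> *\<^sub>R f \<omega>)) \<partial>\<nu>) < \<infinity>" .
qed

lemma P_indicator:
  "P (indicator (B x)) y = measure \<nu> (B y \<inter> B x) / m y"
proof -
  have "(LINT \<omega>:B y|\<nu>. indicator (B x) \<omega>) = integral\<^sup>L \<nu> (indicator (B y \<inter> B x))"
    unfolding set_lebesgue_integral_def by (rule Bochner_Integration.integral_cong) (auto simp: indicator_def)
  also have "\<dots> = measure \<nu> (B y \<inter> B x)" using sets.sets_into_space[OF B_sets[of x]]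
    by (simp add: Int_absorb2 inf.coboundedI2)
  finally show ?thesis unfolding poisson_def by simp
qed

lemma P_indicator_bounds: "0 \<le> P (indicator (B x)) y" "P (indicator (B x)) y \<le> 1"
proof -
  show "0 \<le> P (indicator (B x)) y" unfolding P_indicator using m_pos[of y] by simp
  have "measure \<nu> (B y \<inter> B x) \<le> measure \<nu> (B y)"
    using nu_fin[of y] by (intro measure_mono_fmeasurable) (auto simp: fmeasurable_def)
  then show "P (indicator (B x)) y \<le> 1" unfolding P_indicator using m_pos[of y]
    by (simp add: m_nu_def)
qed

lemma P_indicator_one: "vle E ws y x \<Longrightarrow> P (indicator (B x)) y = 1"
proof -
  assume "vle E ws y x"
  then have "B y \<inter> B x = B y" using sectorB_mono by blast
  then show ?thesis unfolding P_indicator using m_pos[of y] by (simp add: m_nu_def)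
qed

lemma in_Lp_indicator: "in_Lp \<nu> p (indicator (B x))" "Lp_pow \<nu> p (indicator (B x)) = emeasure \<nu> (B x)"
proof -
  show "Lp_pow \<nu> p (indicator (B x)) = emeasure \<nu> (B x)"
  proof -
    have "Lp_pow \<nu> p (indicator (B x)) = (\<integral>\<^sup>+\<omega>. indicator (B x) \<omega> \<partial>\<nu>)"
      unfolding Lp_pow_def by (intro nn_integral_cong) (simp add: indicator_def)
    then show ?thesis by simp
  qed
  then show "in_Lp \<nu> p (indicator (B x))" unfolding in_Lp_def using nu_fin[of x] by simp
qed

end


context main_setting begin

lemma B_emeasure_D:
  assumes "k \<le> level E ws x"
  shows "emeasure \<nu> (B x) = (\<Sum>y\<in>D k x. emeasure \<nu> (B y))"
proof -
  have "(\<Sum>y\<in>D k x. emeasure \<nu> (B y)) = emeasure \<nu> (\<Union>y\<in>D k x. B y)"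
    by (rule sum_emeasure) (auto simp: D_disj D_finite[OF lf assms])
  also have "(\<Union>y\<in>D k x. B y) = B x" using D_cover[OF assms] by simp
  finally show ?thesis by simp
qed

lemma LINT_D:
  assumes k: "k \<le> level E ws x" and p: "1 \<le> p" and f: "in_Lp \<nu> p f"
  shows "(LINT \<omega>:B x|\<nu>. f \<omega>) = (\<Sum>y\<in>D k x. LINT \<omega>:B y|\<nu>. f \<omega>)"
proof -
  have fin: "finite (D k x)" by (rule D_finite[OF lf k])
  have ind: "(indicator (B x) \<omega> :: real) = (\<Sum>y\<in>D k x. indicator (B y) \<omega>)" for \<omega> :: "nat \<Rightarrow> 'v"
  proof -
    have "indicator (B x) \<omega> = (indicator (\<Union>y\<in>D k x. B y) \<omega> :: real)" using D_cover[OF k] by simp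
    also have "\<dots> = (\<Sum>y\<in>D k x. indicator (B y) \<omega>)" by (rule indicator_UN_disjoint[OF fin D_disj])
    finally show ?thesis .
  qed
  have "(LINT \<omega>:B x|\<nu>. f \<omega>) = integral\<^sup>L \<nu> (\<lambda>\<omega>. \<Sum>y\<in>D k x. indicator (B y) \<omega> *\<^sub>R f \<omega>)"
    unfolding set_lebesgue_integral_def
    by (rule Bochner_Integration.integral_cong) (simp_all add: ind sum_distrib_right)
  also have "\<dots> = (\<Sum>y\<in>D k x. integral\<^sup>L \<nu> (\<lambda>\<omega>. indicator (B y) \<omega> *\<^sub>R f \<omega>))"
    by (rule Bochner_Integration.integral_sum) (use Lp_set_integrable[OF p f] in \<open>simp add: set_integrable_def\<close>)
  finally show ?thesis unfolding set_lebesgue_integral_def .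
qed

definition Mk :: "int \<Rightarrow> 'v measure" where
  "Mk k = density (count_space {y. level E ws y = k}) (\<lambda>y. ennreal (m y))"

lemma Mk_sets: "sets (Mk k) = Pow {y. level E ws y = k}"
  unfolding Mk_def by simp

lemma D_sub: "D k x \<subseteq> {y. level E ws y = k}"
  unfolding D_def by auto

lemma Mk_integral: "(\<integral>\<^sup>+y. g y \<partial>Mk k) = (\<integral>\<^sup>+y. ennreal (m y) * g y \<partial>count_space {y. level E ws y = k})"
  unfolding Mk_def by (rule nn_integral_density) simp_all

lemma Mk_D_integral:
  assumes "k \<le> level E ws x"
  shows "(\<integral>\<^sup>+y. g y * indicator (D k x) y \<partial>Mk k) = (\<Sum>y\<in>D k x. ennreal (m y) * g y)"
proof -
  have "(\<integral>\<^sup>+y. g y * indicator (D k x) y \<partial>Mk k) =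
      (\<integral>\<^sup>+y. (ennreal (m y) * g y) * indicator (D k x) y \<partial>count_space {y. level E ws y = k})"
    unfolding Mk_integral by (simp add: mult.assoc)
  also have "\<dots> = (\<integral>\<^sup>+y. ennreal (m y) * g y \<partial>count_space (D k x))"
    by (rule nn_integral_count_space_restrict[OF D_sub])
  also have "\<dots> = (\<Sum>y\<in>D k x. ennreal (m y) * g y)"
    by (rule nn_integral_count_space_finite[OF D_finite[OF lf assms]])
  finally show ?thesis .
qed

lemma Mk_emeasure:
  assumes "k \<le> level E ws x"
  shows "emeasure (Mk k) (D k x) = emeasure \<nu> (B x)"
proof -
  have "emeasure (Mk k) (D k x) = (\<integral>\<^sup>+y. 1 * indicator (D k x) y \<partial>Mk k)"
    using D_sub[of k x] by (simp add: Mk_sets)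
  also have "\<dots> = (\<Sum>y\<in>D k x. ennreal (m y))" using Mk_D_integral[OF assms, of "\<lambda>_. 1"] by simp
  also have "\<dots> = (\<Sum>y\<in>D k x. emeasure \<nu> (B y))" by (simp add: m_ennreal)
  also have "\<dots> = emeasure \<nu> (B x)" using B_emeasure_D[OF assms] by simp
  finally show ?thesis .
qed

end


context main_setting begin

lemma carl_iff: "{y\<in>UNIV. vle E ws y x} = sectorT E ws x"
  unfolding sectorT_def by simp

lemma i_to_ii_Lp:
  assumes C: "0 < C" "\<And>x. measT \<sigma> (sectorT E ws x) \<le> ennreal C * emeasure \<nu> (B x)"
    and p: "1 < p" and f: "in_Lp \<nu> p f"
  shows "LpT_pow \<sigma> p (P f) \<le> ennreal (2 powr p * 2 * cp p * C) * Lp_pow \<nu> p f"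
proof -
  interpret e: embed_setting "vle E ws" \<nu> B \<sigma> "P f" f UNIV C
  proof
    show "\<And>x y z. vle E ws x y \<Longrightarrow> vle E ws y z \<Longrightarrow> vle E ws x z" by (rule vle_trans)
    show "\<And>x y. vle E ws x y \<Longrightarrow> vle E ws y x \<Longrightarrow> x = y" by (rule vle_antisym)
    show "\<And>x. vle E ws x x" by (rule vle_refl)
    show "\<And>x. x \<in> UNIV \<Longrightarrow> B x \<in> sets \<nu>" by simp
    show "\<And>x y. \<not> vle E ws x y \<Longrightarrow> \<not> vle E ws y x \<Longrightarrow> B x \<inter> B y = {}" by (rule sectorB_disj)
    show "\<And>x. measT \<sigma> {y\<in>UNIV. vle E ws y x} \<le> ennreal C * emeasure \<nu> (B x)" unfolding carl_iff by (rule C(2))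
    show "f \<in> borel_measurable \<nu>" using f unfolding in_Lp_def by simp
    show "\<And>x. emeasure \<nu> (B x) < \<infinity>" by (rule nu_fin)
    show "\<And>x. ennreal \<bar>P f x\<bar> * emeasure \<nu> (B x) \<le> (\<integral>\<^sup>+\<omega>. ennreal \<bar>f \<omega>\<bar> * indicator (B x) \<omega> \<partial>\<nu>)"
      by (rule val_nu)
  qed
  have "LpT_pow \<sigma> p (P f) = (\<integral>\<^sup>+x. ennreal (\<bar>P f x\<bar> powr p) * ennreal (\<sigma> x) \<partial>count_space UNIV)"
    unfolding LpT_pow_def by (intro nn_integral_cong) (simp add: ennreal_mult sigma_nonneg)
  also have "\<dots> \<le> ennreal (2 powr p * 2 * cp p * C) * (\<integral>\<^sup>+\<omega>. ennreal (\<bar>f \<omega>\<bar> powr p) \<partial>\<nu>)"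
    by (rule e.strong[OF p]) (use C in simp)
  finally show ?thesis unfolding Lp_pow_def .
qed

lemma i_to_ii_weak:
  assumes C: "0 < C" "\<And>x. measT \<sigma> (sectorT E ws x) \<le> ennreal C * emeasure \<nu> (B x)"
    and f: "in_Lp \<nu> 1 f"
  shows "weakL1T \<sigma> (P f) \<le> ennreal C * Lp_pow \<nu> 1 f"
proof -
  interpret e: embed_setting "vle E ws" \<nu> B \<sigma> "P f" f UNIV C
  proof
    show "\<And>x y z. vle E ws x y \<Longrightarrow> vle E ws y z \<Longrightarrow> vle E ws x z" by (rule vle_trans)
    show "\<And>x y. vle E ws x y \<Longrightarrow> vle E ws y x \<Longrightarrow> x = y" by (rule vle_antisym)
    show "\<And>x. vle E ws x x" by (rule vle_refl)
    show "\<And>x. x \<in> UNIV \<Longrightarrow> B x \<in> sets \<nu>" by simp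
    show "\<And>x y. \<not> vle E ws x y \<Longrightarrow> \<not> vle E ws y x \<Longrightarrow> B x \<inter> B y = {}" by (rule sectorB_disj)
    show "\<And>x. measT \<sigma> {y\<in>UNIV. vle E ws y x} \<le> ennreal C * emeasure \<nu> (B x)" unfolding carl_iff by (rule C(2))
    show "f \<in> borel_measurable \<nu>" using f unfolding in_Lp_def by simp
    show "\<And>x. emeasure \<nu> (B x) < \<infinity>" by (rule nu_fin)
    show "\<And>x. ennreal \<bar>P f x\<bar> * emeasure \<nu> (B x) \<le> (\<integral>\<^sup>+\<omega>. ennreal \<bar>f \<omega>\<bar> * indicator (B x) \<omega> \<partial>\<nu>)"
      by (rule val_nu)
  qed
  have L1: "Lp_pow \<nu> 1 f = (\<integral>\<^sup>+\<omega>. ennreal \<bar>f \<omega>\<bar> \<partial>\<nu>)"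
    unfolding Lp_pow_def by simp
  show ?thesis unfolding weakL1T_def L1
  proof (rule SUP_least)
    fix t :: real assume "t \<in> {0<..}"
    then have t: "0 < t" by simp
    have "{x. t < \<bar>P f x\<bar>} = {x\<in>UNIV. t < \<bar>P f x\<bar>}" by simp
    then show "ennreal t * measT \<sigma> {x. t < \<bar>P f x\<bar>} \<le> ennreal C * (\<integral>\<^sup>+\<omega>. ennreal \<bar>f \<omega>\<bar> \<partial>\<nu>)"
      using e.weak[OF t] by simp
  qed
qed

lemma val_Mk:
  assumes k: "k \<le> level E ws x" and p: "1 \<le> p" and f: "in_Lp \<nu> p f"
  shows "ennreal \<bar>P f x\<bar> * emeasure (Mk k) (D k x) \<le> (\<integral>\<^sup>+y. ennreal \<bar>P f y\<bar> * indicator (D k x) y \<partial>Mk k)"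
proof -
  have "\<bar>P f x\<bar> * m x = \<bar>P f x * m x\<bar>" using m_pos[of x] by (simp add: abs_mult)
  also have "\<dots> = \<bar>LINT \<omega>:B x|\<nu>. f \<omega>\<bar>" by (simp only: P_mult)
  also have "\<dots> = \<bar>\<Sum>y\<in>D k x. LINT \<omega>:B y|\<nu>. f \<omega>\<bar>" using LINT_D[OF k p f] by simp
  also have "\<dots> \<le> (\<Sum>y\<in>D k x. \<bar>LINT \<omega>:B y|\<nu>. f \<omega>\<bar>)" by (rule sum_abs)
  also have "\<dots> = (\<Sum>y\<in>D k x. m y * \<bar>P f y\<bar>)"
    by (intro sum.cong refl) (metis P_mult abs_mult abs_of_pos m_pos mult.commute)
  finally have r: "\<bar>P f x\<bar> * m x \<le> (\<Sum>y\<in>D k x. m y * \<bar>P f y\<bar>)" .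
  have "ennreal \<bar>P f x\<bar> * emeasure (Mk k) (D k x) = ennreal (\<bar>P f x\<bar> * m x)"
    unfolding Mk_emeasure[OF k] m_ennreal[symmetric] using m_pos[of x] by (simp add: ennreal_mult less_imp_le)
  also have "\<dots> \<le> ennreal (\<Sum>y\<in>D k x. m y * \<bar>P f y\<bar>)" using r by (rule ennreal_leI)
  also have "\<dots> = (\<Sum>y\<in>D k x. ennreal (m y) * ennreal \<bar>P f y\<bar>)"
    using m_pos by (simp add: sum_ennreal[symmetric] ennreal_mult less_imp_le)
  also have "\<dots> = (\<integral>\<^sup>+y. ennreal \<bar>P f y\<bar> * indicator (D k x) y \<partial>Mk k)"
    by (rule Mk_D_integral[OF k, symmetric])
  finally show ?thesis .
qed

lemma i_to_iii:
  assumes C: "0 < C" "\<And>x. measT \<sigma> (sectorT E ws x) \<le> ennreal C * emeasure \<nu> (B x)"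
    and p: "1 < p" and f: "in_Lp \<nu> p f"
  shows "LpT_pow \<sigma> p (P f) \<le> ennreal (2 powr p * 2 * cp p * C) * Hp_pow E base ws \<nu> p (P f)"
proof -
  define K where "K = 2 powr p * 2 * cp p * C"
  define g where "g x = ennreal (\<bar>P f x\<bar> powr p) * ennreal (\<sigma> x)" for x
  have lev: "(\<integral>\<^sup>+x. g x \<partial>count_space {x. k \<le> level E ws x}) \<le> ennreal K * Hp_pow E base ws \<nu> p (P f)" for k
  proof -
    interpret e: embed_setting "vle E ws" "Mk k" "D k" \<sigma> "P f" "P f" "{x. k \<le> level E ws x}" C
    proof
      show "\<And>x y z. vle E ws x y \<Longrightarrow> vle E ws y z \<Longrightarrow> vle E ws x z" by (rule vle_trans)
      show "\<And>x y. vle E ws x y \<Longrightarrow> vle E ws y x \<Longrightarrow> x = y" by (rule vle_antisym)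
      show "\<And>x. vle E ws x x" by (rule vle_refl)
      show "\<And>x. x \<in> {x. k \<le> level E ws x} \<Longrightarrow> D k x \<in> sets (Mk k)" using D_sub by (simp add: Mk_sets)
      show "\<And>x y. x \<in> {x. k \<le> level E ws x} \<Longrightarrow> y \<in> {x. k \<le> level E ws x} \<Longrightarrow>
          \<not> vle E ws x y \<Longrightarrow> \<not> vle E ws y x \<Longrightarrow> D k x \<inter> D k y = {}" by (rule D_disj2)
      show "measT \<sigma> {y \<in> {x. k \<le> level E ws x}. vle E ws y x} \<le> ennreal C * emeasure (Mk k) (D k x)"
        if "x \<in> {x. k \<le> level E ws x}" for x
      proof -
        have "measT \<sigma> {y \<in> {x. k \<le> level E ws x}. vle E ws y x} \<le> measT \<sigma> (sectorT E ws x)"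
          unfolding sectorT_def by (rule measT_mono) auto
        also have "\<dots> \<le> ennreal C * emeasure \<nu> (B x)" by (rule C(2))
        finally show ?thesis using Mk_emeasure[of k x] that by simp
      qed
      show "P f \<in> borel_measurable (Mk k)" by (simp add: Mk_def)
      show "emeasure (Mk k) (D k x) < \<infinity>" if "x \<in> {x. k \<le> level E ws x}" for x
        using Mk_emeasure[of k x] that nu_fin[of x] by simp
      show "ennreal \<bar>P f x\<bar> * emeasure (Mk k) (D k x) \<le> (\<integral>\<^sup>+y. ennreal \<bar>P f y\<bar> * indicator (D k x) y \<partial>Mk k)"
        if "x \<in> {x. k \<le> level E ws x}" for x
        using val_Mk[of k x p f] that p f by simp
    qed
    have "(\<integral>\<^sup>+x. g x \<partial>count_space {x. k \<le> level E ws x}) \<le> ennreal K * (\<integral>\<^sup>+y. ennreal (\<bar>P f y\<bar> powr p) \<partial>Mk k)"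
      unfolding g_def K_def by (rule e.strong[OF p]) (use C in simp)
    also have "(\<integral>\<^sup>+y. ennreal (\<bar>P f y\<bar> powr p) \<partial>Mk k) =
        (\<integral>\<^sup>+y. ennreal (\<bar>P f y\<bar> powr p * m y) \<partial>count_space {y. level E ws y = k})"
      unfolding Mk_integral by (intro nn_integral_cong) (simp add: ennreal_mult m_pos less_imp_le mult.commute)
    also have "\<dots> \<le> Hp_pow E base ws \<nu> p (P f)"
      unfolding Hp_pow_def by (rule SUP_upper) simp
    finally show ?thesis by (simp add: mult_left_mono)
  qed
  have "LpT_pow \<sigma> p (P f) = (\<integral>\<^sup>+x. g x \<partial>count_space UNIV)"
    unfolding LpT_pow_def g_def by (intro nn_integral_cong) (simp add: ennreal_mult sigma_nonneg)
  also have "\<dots> \<le> ennreal K * Hp_pow E base ws \<nu> p (P f)"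
  proof (rule nn_integral_count_space_finsup)
    fix F :: "'v set" assume F: "finite F" "F \<subseteq> UNIV"
    show "sum g F \<le> ennreal K * Hp_pow E base ws \<nu> p (P f)"
    proof (cases "F = {}")
      case True then show ?thesis by simp
    next
      case False
      define k where "k = Min (level E ws ` F)"
      have sub: "F \<subseteq> {x. k \<le> level E ws x}" unfolding k_def using F(1) by auto
      have "sum g F = (\<integral>\<^sup>+x. g x \<partial>count_space F)" by (rule nn_integral_count_space_finite[OF F(1), symmetric])
      also have "\<dots> \<le> (\<integral>\<^sup>+x. g x \<partial>count_space {x. k \<le> level E ws x})"
        by (rule nn_integral_count_space_subset[OF sub])
      also have "\<dots> \<le> ennreal K * Hp_pow E base ws \<nu> p (P f)" by (rule lev)
      finally show ?thesis .
    qed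
  qed
  finally show ?thesis unfolding K_def .
qed

end


context main_setting begin

lemma ii_to_i:
  assumes C: "0 < C" and w: "\<And>f. in_Lp \<nu> 1 f \<Longrightarrow> weakL1T \<sigma> (P f) \<le> ennreal C * Lp_pow \<nu> 1 f"
  shows "carleson E base ws \<nu> \<sigma>"
  unfolding carleson_def
proof (intro exI[of _ "2 * C"] conjI allI)
  show "0 < 2 * C" using C by simp
  fix x
  define f :: "(nat \<Rightarrow> 'v) \<Rightarrow> real" where "f = indicator (B x)"
  have sub: "sectorT E ws x \<subseteq> {y. 1/2 < \<bar>P f y\<bar>}"
    unfolding sectorT_def f_def using P_indicator_one by auto
  have "ennreal (1/2) * measT \<sigma> (sectorT E ws x) \<le> ennreal (1/2) * measT \<sigma> {y. 1/2 < \<bar>P f y\<bar>}"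
    by (rule mult_left_mono[OF measT_mono[OF sub]]) simp
  also have "\<dots> \<le> weakL1T \<sigma> (P f)"
    unfolding weakL1T_def by (rule SUP_upper[where f="\<lambda>t. ennreal t * measT \<sigma> {y. t < \<bar>P f y\<bar>}"]) simp
  also have "\<dots> \<le> ennreal C * emeasure \<nu> (B x)"
    using w[of f] in_Lp_indicator[of 1 x] unfolding f_def by simp
  finally have 1: "ennreal (1/2) * measT \<sigma> (sectorT E ws x) \<le> ennreal C * emeasure \<nu> (B x)" .
  have h: "ennreal 2 * ennreal (1/2) = 1" by (subst ennreal_mult[symmetric]) auto
  have "measT \<sigma> (sectorT E ws x) = ennreal 2 * (ennreal (1/2) * measT \<sigma> (sectorT E ws x))"
    by (simp only: mult.assoc[symmetric] h) simp
  also have "\<dots> \<le> ennreal 2 * (ennreal C * emeasure \<nu> (B x))" by (rule mult_left_mono[OF 1]) simp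
  also have "\<dots> = ennreal (2 * C) * emeasure \<nu> (B x)" using C by (simp add: ennreal_mult mult.assoc)
  finally show "measT \<sigma> (sectorT E ws x) \<le> ennreal (2 * C) * emeasure \<nu> (B x)" .
qed

lemma iii_to_i:
  assumes C: "0 < C"
    and h: "\<And>f. in_Lp \<nu> 2 f \<Longrightarrow> LpT_pow \<sigma> 2 (P f) \<le> ennreal (C powr 2) * Hp_pow E base ws \<nu> 2 (P f)"
  shows "carleson E base ws \<nu> \<sigma>"
  unfolding carleson_def
proof (intro exI[of _ "C powr 2"] conjI allI)
  show "0 < C powr 2" using C by simp
  fix x
  define f :: "(nat \<Rightarrow> 'v) \<Rightarrow> real" where "f = indicator (B x)"
  have "measT \<sigma> (sectorT E ws x) = (\<integral>\<^sup>+y. ennreal (\<bar>P f y\<bar> powr 2 * \<sigma> y) \<partial>count_space (sectorT E ws x))"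
    unfolding measT_def
  proof (intro nn_integral_cong)
    fix y assume "y \<in> space (count_space (sectorT E ws x))"
    then have "P f y = 1" unfolding f_def sectorT_def using P_indicator_one by simp
    then show "ennreal (\<sigma> y) = ennreal (\<bar>P f y\<bar> powr 2 * \<sigma> y)" by simp
  qed
  also have "\<dots> \<le> LpT_pow \<sigma> 2 (P f)"
    unfolding LpT_pow_def by (rule nn_integral_count_space_subset) simp
  also have "\<dots> \<le> ennreal (C powr 2) * Hp_pow E base ws \<nu> 2 (P f)"
    using h[of f] in_Lp_indicator[of 2 x] unfolding f_def by simp
  also have "Hp_pow E base ws \<nu> 2 (P f) \<le> emeasure \<nu> (B x)"
    unfolding Hp_pow_def
  proof (rule SUP_least)
    fix k :: int
    show "(\<integral>\<^sup>+y. ennreal (\<bar>P f y\<bar> powr 2 * m y) \<partial>count_space {y. level E ws y = k}) \<le> emeasure \<nu> (B x)"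
    proof (rule nn_integral_count_space_finsup)
      fix F assume F: "finite F" "F \<subseteq> {y. level E ws y = k}"
      have "(\<Sum>y\<in>F. ennreal (\<bar>P f y\<bar> powr 2 * m y)) \<le> (\<Sum>y\<in>F. emeasure \<nu> (B y \<inter> B x))"
      proof (rule sum_mono)
        fix y
        define a where "a = P f y"
        have a: "0 \<le> a" "a \<le> 1" unfolding a_def f_def using P_indicator_bounds by auto
        have "\<bar>a\<bar> powr 2 = a * a" using a by (simp add: power2_eq_square)
        also have "\<dots> \<le> a" using a by (simp add: mult_left_le)
        finally have "\<bar>a\<bar> powr 2 * m y \<le> a * m y" using m_pos[of y] by (simp add: mult_right_mono)
        also have "a * m y = measure \<nu> (B y \<inter> B x)" unfolding a_def f_def P_indicator using m_pos[of y] by simp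
        finally have r: "\<bar>P f y\<bar> powr 2 * m y \<le> measure \<nu> (B y \<inter> B x)" unfolding a_def .
        have "emeasure \<nu> (B y \<inter> B x) \<le> emeasure \<nu> (B x)" by (rule emeasure_mono) auto
        then have "emeasure \<nu> (B y \<inter> B x) \<noteq> \<infinity>" using nu_fin[of x] by (auto simp: top_unique)
        then have "emeasure \<nu> (B y \<inter> B x) = ennreal (measure \<nu> (B y \<inter> B x))"
          by (simp add: emeasure_eq_ennreal_measure)
        then show "ennreal (\<bar>P f y\<bar> powr 2 * m y) \<le> emeasure \<nu> (B y \<inter> B x)"
          using r by (simp add: ennreal_leI)
      qed
      also have "\<dots> = emeasure \<nu> (\<Union>y\<in>F. B y \<inter> B x)"
      proof (rule sum_emeasure)
        show "(\<lambda>y. B y \<inter> B x) ` F \<subseteq> sets \<nu>" by auto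
        show "disjoint_family_on (\<lambda>y. B y \<inter> B x) F"
          unfolding disjoint_family_on_def using F(2) same_level_disj by blast
        show "finite F" by (rule F(1))
      qed
      also have "\<dots> \<le> emeasure \<nu> (B x)" by (rule emeasure_mono) auto
      finally show "(\<Sum>y\<in>F. ennreal (\<bar>P f y\<bar> powr 2 * m y)) \<le> emeasure \<nu> (B x)" .
    qed
  qed
  then have "ennreal (C powr 2) * Hp_pow E base ws \<nu> 2 (P f) \<le> ennreal (C powr 2) * emeasure \<nu> (B x)"
    by (rule mult_left_mono) simp
  finally show "measT \<sigma> (sectorT E ws x) \<le> ennreal (C powr 2) * emeasure \<nu> (B x)" .
qed

end


lemma K_powr: "0 < K \<Longrightarrow> 0 < p \<Longrightarrow> (K powr (1 / p)) powr p = (K::real)"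
  by (simp add: powr_powr)

theorem theorem2p4:
  fixes E :: "'v \<Rightarrow> 'v \<Rightarrow> bool" and base :: 'v and ws :: "nat \<Rightarrow> 'v"
    and \<nu> :: "(nat \<Rightarrow> 'v) measure" and \<sigma> :: "'v \<Rightarrow> real"
  assumes tree: "is_tree E"
    and lf: "locally_finite E"
    and ws_ray: "ray E ws" and ws0: "ws 0 = base"
    and nu_space: "space \<nu> = bdry E base ws"
    and nu_sets: "sets \<nu> = sigma_sets (bdry E base ws) (range (sectorB E base ws))"
    and nu_pos: "\<And>x. 0 < emeasure \<nu> (sectorB E base ws x)"
    and nu_fin: "\<And>x. emeasure \<nu> (sectorB E base ws x) < \<infinity>"
    and sigma_nonneg: "\<And>x. 0 \<le> \<sigma> x"
  shows "(carleson E base ws \<nu> \<sigma> \<longleftrightarrow>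
           ((\<forall>p>1. \<exists>C>0. \<forall>f. in_Lp \<nu> p f \<longrightarrow>
                LpT_pow \<sigma> p (poisson E base ws \<nu> f) \<le> ennreal (C powr p) * Lp_pow \<nu> p f)
            \<and> (\<exists>C>0. \<forall>f. in_Lp \<nu> 1 f \<longrightarrow>
                weakL1T \<sigma> (poisson E base ws \<nu> f) \<le> ennreal C * Lp_pow \<nu> 1 f)))
       \<and> (carleson E base ws \<nu> \<sigma> \<longleftrightarrow>
           (\<forall>p>1. \<exists>C>0. \<forall>f. in_Lp \<nu> p f \<longrightarrow>
                LpT_pow \<sigma> p (poisson E base ws \<nu> f)
                  \<le> ennreal (C powr p) * Hp_pow E base ws \<nu> p (poisson E base ws \<nu> f)))"
proof -
  interpret main_setting E ws base \<nu> \<sigma>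
    using tree ws_ray lf nu_sets nu_pos nu_fin sigma_nonneg by unfold_locales auto
  have Kpos: "0 < 2 powr p * 2 * cp p * C" if "1 < p" "0 < C" for p C :: real
    using cp_pos[OF that(1)] that(2) by simp
  show ?thesis
  proof (rule conjI; rule iffI)
    assume "carleson E base ws \<nu> \<sigma>"
    then obtain C where C: "0 < C" "\<And>x. measT \<sigma> (sectorT E ws x) \<le> ennreal C * emeasure \<nu> (B x)"
      unfolding carleson_def by blast
    show "(\<forall>p>1. \<exists>C>0. \<forall>f. in_Lp \<nu> p f \<longrightarrow>
                LpT_pow \<sigma> p (P f) \<le> ennreal (C powr p) * Lp_pow \<nu> p f)
            \<and> (\<exists>C>0. \<forall>f. in_Lp \<nu> 1 f \<longrightarrow>
                weakL1T \<sigma> (P f) \<le> ennreal C * Lp_pow \<nu> 1 f)"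
    proof (intro conjI allI impI)
      fix p :: real assume p: "1 < p"
      define K where "K = 2 powr p * 2 * cp p * C"
      have K: "0 < K" unfolding K_def using Kpos[OF p C(1)] .
      show "\<exists>C>0. \<forall>f. in_Lp \<nu> p f \<longrightarrow> LpT_pow \<sigma> p (P f) \<le> ennreal (C powr p) * Lp_pow \<nu> p f"
      proof (intro exI[of _ "K powr (1 / p)"] conjI allI impI)
        show "0 < K powr (1 / p)" using K by simp
        fix f assume "in_Lp \<nu> p f"
        then show "LpT_pow \<sigma> p (P f) \<le> ennreal ((K powr (1 / p)) powr p) * Lp_pow \<nu> p f"
          using i_to_ii_Lp[OF C p] K p unfolding K_def by (simp add: K_powr)
      qed
    next
      show "\<exists>C>0. \<forall>f. in_Lp \<nu> 1 f \<longrightarrow> weakL1T \<sigma> (P f) \<le> ennreal C * Lp_pow \<nu> 1 f"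
        using i_to_ii_weak[OF C] C(1) by blast
    qed
  next
    assume "(\<forall>p>1. \<exists>C>0. \<forall>f. in_Lp \<nu> p f \<longrightarrow>
                LpT_pow \<sigma> p (P f) \<le> ennreal (C powr p) * Lp_pow \<nu> p f)
            \<and> (\<exists>C>0. \<forall>f. in_Lp \<nu> 1 f \<longrightarrow>
                weakL1T \<sigma> (P f) \<le> ennreal C * Lp_pow \<nu> 1 f)"
    then obtain C where "0 < C" "\<And>f. in_Lp \<nu> 1 f \<Longrightarrow> weakL1T \<sigma> (P f) \<le> ennreal C * Lp_pow \<nu> 1 f"
      by blast
    then show "carleson E base ws \<nu> \<sigma>" by (rule ii_to_i)
  next
    assume "carleson E base ws \<nu> \<sigma>"
    then obtain C where C: "0 < C" "\<And>x. measT \<sigma> (sectorT E ws x) \<le> ennreal C * emeasure \<nu> (B x)"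
      unfolding carleson_def by blast
    show "\<forall>p>1. \<exists>C>0. \<forall>f. in_Lp \<nu> p f \<longrightarrow>
                LpT_pow \<sigma> p (P f) \<le> ennreal (C powr p) * Hp_pow E base ws \<nu> p (P f)"
    proof (intro allI impI)
      fix p :: real assume p: "1 < p"
      define K where "K = 2 powr p * 2 * cp p * C"
      have K: "0 < K" unfolding K_def using Kpos[OF p C(1)] .
      show "\<exists>C>0. \<forall>f. in_Lp \<nu> p f \<longrightarrow> LpT_pow \<sigma> p (P f) \<le> ennreal (C powr p) * Hp_pow E base ws \<nu> p (P f)"
      proof (intro exI[of _ "K powr (1 / p)"] conjI allI impI)
        show "0 < K powr (1 / p)" using K by simp
        fix f assume "in_Lp \<nu> p f"
        then show "LpT_pow \<sigma> p (P f) \<le> ennreal ((K powr (1 / p)) powr p) * Hp_pow E base ws \<nu> p (P f)"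
          using i_to_iii[OF C p] K p unfolding K_def by (simp add: K_powr)
      qed
    qed
  next
    assume "\<forall>p>1. \<exists>C>0. \<forall>f. in_Lp \<nu> p f \<longrightarrow>
                LpT_pow \<sigma> p (P f) \<le> ennreal (C powr p) * Hp_pow E base ws \<nu> p (P f)"
    then obtain C where "0 < C" "\<And>f. in_Lp \<nu> 2 f \<Longrightarrow> LpT_pow \<sigma> 2 (P f) \<le> ennreal (C powr 2) * Hp_pow E base ws \<nu> 2 (P f)"
      by (metis one_less_numeral_iff semiring_norm(76))
    then show "carleson E base ws \<nu> \<sigma>" by (rule iii_to_i)
  qed
qed


end
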